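(* For $j=1,2$ let $a_j\in\mathbb D$, $a_j'=|1+a_j|-1$, $\gamma_{a_j}=\arg(1+\overline{a_j})$, $0\le\gamma_j<2\pi$, and let $f_j=h_j+\overline{g_j}\in\mathcal S(H^{a_j}_{\gamma_j})$ with $h_j(z)+e^{-2i(\gamma_j+\gamma_{a_j})}g_j(z)=\frac{(1+a_j')z}{1-e^{i(\gamma_j+\gamma_{a_j})}z}$ and dilatations $$\omega_{f_1}(z)=e^{2i(\gamma_1+\gamma_{a_1})}\frac{a_1'-ze^{i(\gamma_1+\gamma_{a_1})}}{1-a_1'ze^{i(\gamma_1+\gamma_{a_1})}},\qquad \omega_{f_2}(z)=e^{2i(\gamma_2+\gamma_{a_2})}\frac{a_2'+ze^{i\theta}}{1+a_2'ze^{i\theta}},$$ where $\theta\in\mathbb R$. Suppose one of the following holds: (1) $\cos(\theta-\gamma_2-\gamma_{a_2})=-1$ and $1+3a_1'+3a_2'+a_1'a_2'\ge0$; (2) $\cos(\theta-\gamma_2-\gamma_{a_2})=1$ and $1+3a_1'+3a_1'a_2'+(a_1')^2a_2'>0$. Then $f_1*f_2$ is univalent and convex in the direction $-\Gamma$, where $\Gamma=\gamma_1+\gamma_2+\gamma_{a_1}+\gamma_{a_2}$.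
   Context: $\mathbb D$ is the open unit disk. Harmonic $f=h+\overline g$ on $\mathbb D$ ($h,g$ analytic, $g(0)=0$), dilatation $\omega_f=g'/h'$; $\mathcal H$: those with $h(0)=g(0)=0$, $h'(0)=1$; $\mathcal S_H$: sense-preserving ($|h'|>|g'|$) univalent members of $\mathcal H$. $H^a_\gamma=\{w:\mathrm{Re}(\frac{e^{i\gamma}}{1+a}w)>-\frac12\}$, $\mathcal S(H^a_\gamma)=\{f\in\mathcal S_H:f(\mathbb D)=H^a_\gamma\}$. Harmonic convolution: $f*F=\sum a_nA_nz^n+\sum\overline{b_nB_n}\,\overline z^n$ for $f=\sum a_nz^n+\sum\overline{b_n}\,\overline z^n$, $F=\sum A_nz^n+\sum\overline{B_n}\,\overline z^n$. A univalent map $f$ is convex in the direction $\alpha$ (modulo $\pi$) if each line parallel to the line through $0$ and $e^{i\alpha}$ meets $f(\mathbb D)$ in an interval or the empty set. *)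

theory Defs
  imports "HOL-Analysis.Analysis"
begin

definition unit_disk :: "complex set" where
  "unit_disk = ball 0 1"

definition taylor_coeff :: "(complex \<Rightarrow> complex) \<Rightarrow> nat \<Rightarrow> complex" where
  "taylor_coeff h n = (deriv ^^ n) h 0 / fact n"

definition hadamard :: "(complex \<Rightarrow> complex) \<Rightarrow> (complex \<Rightarrow> complex) \<Rightarrow> complex \<Rightarrow> complex" where
  "hadamard h H z = (\<Sum>n. taylor_coeff h n * taylor_coeff H n * z ^ n)"

definition harm_conv :: "(complex \<Rightarrow> complex) \<Rightarrow> (complex \<Rightarrow> complex) \<Rightarrow>
    (complex \<Rightarrow> complex) \<Rightarrow> (complex \<Rightarrow> complex) \<Rightarrow> complex \<Rightarrow> complex" where
  "harm_conv h g H G = (\<lambda>z. hadamard h H z + cnj (hadamard g G z))"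

definition class_SH :: "(complex \<Rightarrow> complex) \<Rightarrow> (complex \<Rightarrow> complex) \<Rightarrow> bool" where
  "class_SH h g \<longleftrightarrow> h holomorphic_on unit_disk \<and> g holomorphic_on unit_disk \<and>
     h 0 = 0 \<and> g 0 = 0 \<and> deriv h 0 = 1 \<and>
     (\<forall>z\<in>unit_disk. cmod (deriv g z) < cmod (deriv h z)) \<and>
     inj_on (\<lambda>z. h z + cnj (g z)) unit_disk"

definition half_plane :: "complex \<Rightarrow> real \<Rightarrow> complex set" where
  "half_plane a \<gamma> = {w. Re (cis \<gamma> / (1 + a) * w) > - 1/2}"

definition class_S_half :: "complex \<Rightarrow> real \<Rightarrow> (complex \<Rightarrow> complex) \<Rightarrow> (complex \<Rightarrow> complex) \<Rightarrow> bool" where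
  "class_S_half a \<gamma> h g \<longleftrightarrow> class_SH h g \<and>
     (\<lambda>z. h z + cnj (g z)) ` unit_disk = half_plane a \<gamma>"

definition convex_in_direction :: "(complex \<Rightarrow> complex) \<Rightarrow> real \<Rightarrow> bool" where
  "convex_in_direction F \<alpha> \<longleftrightarrow>
     (\<forall>w. convex (F ` unit_disk \<inter> {w + complex_of_real t * cis \<alpha> | t. True}))"

definition aprime :: "complex \<Rightarrow> real" where
  "aprime a = cmod (1 + a) - 1"

definition gam :: "complex \<Rightarrow> real" where
  "gam a = Arg (1 + cnj a)"

end

theory Submission
  imports Defs "HOL-Complex_Analysis.Complex_Analysis"
begin

definition e0 :: "nat \<Rightarrow> real" where "e0 n = (if n = 0 then 0 else 1)"
definition od :: "nat \<Rightarrow> real" where "od n = (if odd n then 1 else 0)"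
definition oi :: "nat \<Rightarrow> real" where "oi n = (if odd n then 1 / real n else 0)"

lemma ser0: assumes "norm (u::complex) < 1"
  shows "(\<lambda>n. of_real (e0 n) * u^n) sums (u / (1 - u))"
proof -
  have "(\<lambda>n. u^n) sums (1/(1-u))" using geometric_sums assms by blast
  hence "(\<lambda>n. u * u^n) sums (u * (1/(1-u)))" by (rule sums_mult)
  hence "(\<lambda>n. of_real (e0 (Suc n)) * u^(Suc n)) sums (u/(1-u))" by (simp add: e0_def)
  thus ?thesis by (subst (asm) sums_Suc_iff) (simp add: e0_def)
qed

lemma ser1: assumes "norm (u::complex) < 1"
  shows "(\<lambda>n. of_nat n * u^n) sums (u / (1 - u)^2)"
proof -
  have "(\<lambda>n. of_nat (Suc n) * u^n) sums (1/(1-u)^2)" using geometric_deriv_sums assms by blast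
  hence "(\<lambda>n. u * (of_nat (Suc n) * u^n)) sums (u * (1/(1-u)^2))" by (rule sums_mult)
  hence "(\<lambda>n. of_nat (Suc n) * u^(Suc n)) sums (u/(1-u)^2)" by (simp add: algebra_simps)
  thus ?thesis by (subst (asm) sums_Suc_iff) simp
qed

lemma ser2: assumes "norm (u::complex) < 1"
  shows "(\<lambda>n. of_nat n ^ 2 * u^n) sums (u * (1 + u) / (1 - u)^3)"
proof -
  have d: "((\<lambda>u. u / (1 - u)^2) has_field_derivative ((1 + u)/(1-u)^3)) (at u)"
  proof -
    have ne: "1 - u \<noteq> 0" using assms by auto
    show ?thesis
      apply (rule derivative_eq_intros refl)+
      using ne apply (simp_all add: divide_simps)
      apply algebra
      done
  qed
  have "(\<lambda>n. diffs (\<lambda>n. of_nat n) n * u^n) sums ((1 + u)/(1-u)^3)"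
    by (rule termdiffs_sums_strong[OF ser1 d assms])
  hence "(\<lambda>n. of_nat (Suc n) ^ 2 * u^n) sums ((1 + u)/(1-u)^3)"
    by (simp add: diffs_def power2_eq_square)
  hence "(\<lambda>n. u * (of_nat (Suc n) ^ 2 * u^n)) sums (u * ((1 + u)/(1-u)^3))" by (rule sums_mult)
  hence "(\<lambda>n. of_nat (Suc n) ^ 2 * u^(Suc n)) sums (u * (1 + u)/(1-u)^3)" by (simp add: algebra_simps)
  thus ?thesis by (subst (asm) sums_Suc_iff) simp
qed

lemma ser_od: assumes "norm (u::complex) < 1"
  shows "(\<lambda>n. of_real (od n) * u^n) sums (u / (1 - u^2))"
proof -
  have a: "(\<lambda>n. u^n) sums (1/(1-u))" using geometric_sums assms by blast
  have b: "(\<lambda>n. (-u)^n) sums (1/(1-(-u)))" using geometric_sums assms by (metis norm_minus_cancel)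
  have s: "(\<lambda>n. (u^n - (-u)^n) / 2) sums ((1/(1-u) - 1/(1-(-u)))/2)"
    by (intro sums_divide sums_diff a b)
  have e: "(\<lambda>n. (u^n - (-u)^n) / 2) = (\<lambda>n. of_real (od n) * u^n)"
    by (auto simp: od_def fun_eq_iff)
  have v: "(1/(1-u) - 1/(1-(-u)))/2 = u / (1 - u^2)"
  proof -
    have "1 - u \<noteq> 0" "1 + u \<noteq> 0" using assms by (auto, metis norm_minus_cancel norm_one order_less_irrefl add_eq_0_iff)
    thus ?thesis by (simp add: divide_simps) algebra
  qed
  show ?thesis using s unfolding e v .
qed

lemma ser_oi: assumes "norm (u::complex) < 1"
  shows "(\<lambda>n. of_real (oi n) * u^n) sums ((Ln (1 + u) - Ln (1 - u)) / 2)"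
proof -
  have a: "(\<lambda>n. - ((-u)^n) / of_nat n) sums Ln (1 + u)" using Ln_series' assms by blast
  have b: "(\<lambda>n. - ((-(-u))^n) / of_nat n) sums Ln (1 + (-u))" using Ln_series' assms by (metis norm_minus_cancel)
  have "(\<lambda>n. (- ((-u)^n) / of_nat n - - ((-(-u))^n) / of_nat n) / 2) sums ((Ln (1 + u) - Ln (1 + (-u))) / 2)"
    by (intro sums_divide sums_diff a b)
  moreover have "(\<lambda>n. (- ((-u)^n) / of_nat n - - ((-(-u))^n) / of_nat n) / 2) = (\<lambda>n. of_real (oi n) * u^n)"
    by (auto simp: oi_def fun_eq_iff)
  ultimately show ?thesis by simp
qed

lemma tc_from_sums:
  assumes "\<forall>u\<in>ball 0 1. (\<lambda>n. c n * u^n) sums f u"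
  shows "taylor_coeff f n = c n"
proof -
  have "eventually (\<lambda>u. (\<lambda>n. fps_nth (Abs_fps c) n * u ^ n) sums f u) (nhds 0)"
    unfolding eventually_nhds using assms by (intro exI[of _ "ball 0 1"]) auto
  hence "f has_fps_expansion Abs_fps c" by (rule has_fps_expansionI)
  from fps_nth_fps_expansion[OF this, of n] show ?thesis by (simp add: taylor_coeff_def)
qed

definition Aco :: "real \<Rightarrow> nat \<Rightarrow> real" where
  "Aco a n = ((1 - a) * real n + (1 + a) * e0 n) / 2"

lemma cis_facts: "cnj (cis p) * cis p = 1" "cis (2 * p) = (cis p)^2" "cis (-2 * p) = (cnj (cis p))^2"
  "norm (cis p) = 1"
proof -
  show "cnj (cis p) * cis p = 1" by (simp add: cis_cnj cis_mult)
  show "cis (2 * p) = (cis p)^2" by (simp add: Complex.DeMoivre)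
  show "cis (-2 * p) = (cnj (cis p))^2" by (simp add: Complex.DeMoivre cis_cnj)
  show "norm (cis p) = 1" by simp
qed

lemma deriv_from_eq:
  assumes h: "h holomorphic_on ball 0 1" and g: "g holomorphic_on ball 0 1"
    and eq: "\<forall>z\<in>ball 0 1. h z + c * g z = R z"
    and R: "(R has_field_derivative R') (at z)" and z: "z \<in> ball 0 1"
  shows "deriv h z + c * deriv g z = R'"
proof -
  have gd: "(g has_field_derivative deriv g z) (at z)"
    using g z by (meson holomorphic_derivI open_ball)
  have "((\<lambda>z. R z - c * g z) has_field_derivative R' - c * deriv g z) (at z)"
    by (rule DERIV_diff[OF R DERIV_cmult[OF gd]])
  hence "(h has_field_derivative R' - c * deriv g z) (at z)"
    by (rule has_field_derivative_transform_within_open[where S="ball 0 1"]) (use z eq in \<open>auto simp: algebra_simps\<close>)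
  hence "deriv h z = R' - c * deriv g z" by (rule DERIV_imp_deriv)
  thus ?thesis by simp
qed

lemma unit_facts: assumes "norm (e::complex) = 1"
  shows "cnj e * e = 1" 
  by (metis complex_norm_square mult.commute of_real_1 power_one assms)

lemma norm_mult_unit: assumes "norm (e::complex) = 1" "z \<in> ball 0 1" shows "norm (e * z) < 1"
  using assms by (simp add: norm_mult)

lemma d_koebe: assumes "norm (u::complex) < 1"
  shows "((\<lambda>u. u / (1 - u)^2) has_field_derivative ((1 + u)/(1-u)^3)) (at u)"
proof -
  have ne: "1 - u \<noteq> 0" using assms by auto
  show ?thesis
    apply (rule derivative_eq_intros refl)+
    using ne apply (simp_all add: divide_simps)
    apply algebra
    done
qed

lemma d_geo: assumes "norm (u::complex) < 1"
  shows "((\<lambda>u. u / (1 - u)) has_field_derivative (1/(1-u)^2)) (at u)"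
proof -
  have ne: "1 - u \<noteq> 0" using assms by auto
  show ?thesis
    apply (rule derivative_eq_intros refl)+
    using ne apply (simp_all add: divide_simps)
    apply algebra
    done
qed

lemma d_comp: "(f has_field_derivative D) (at (e*z)) \<Longrightarrow> ((\<lambda>z. f (e*z)) has_field_derivative D * e) (at z)"
proof -
  assume f: "(f has_field_derivative D) (at (e*z))"
  have "((\<lambda>z. e*z) has_field_derivative e) (at z)" by (auto intro!: derivative_eq_intros)
  from DERIV_chain[OF f this] show ?thesis by (simp add: o_def)
qed

lemma eq_from_deriv:
  assumes "\<forall>z\<in>ball 0 1. (f has_field_derivative D z) (at z)"
    and "\<forall>z\<in>ball 0 1. (g has_field_derivative D z) (at z)"
    and "f 0 = g (0::complex)"
  shows "\<forall>z\<in>ball 0 1. f z = g z"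
proof -
  have "\<exists>c. \<forall>x\<in>ball 0 1. f x - g x = c"
  proof (rule has_field_derivative_zero_constant)
    fix x assume x: "x \<in> ball (0::complex) 1"
    have "((\<lambda>x. f x - g x) has_field_derivative D x - D x) (at x)"
      using assms x by (intro DERIV_diff) auto
    thus "((\<lambda>x. f x - g x) has_field_derivative 0) (at x within ball 0 1)"
      by (simp add: has_field_derivative_at_within)
  qed simp
  then obtain c where c: "\<forall>x\<in>ball 0 1. f x - g x = c" by blast
  have "c = 0" using c assms(3) by force
  thus ?thesis using c by auto
qed

lemma type1:
  fixes a :: real and e :: complex and h g :: "complex \<Rightarrow> complex"
  assumes e: "norm e = 1" and a: "-1 < a" "a < 1"
    and holh: "h holomorphic_on ball 0 1" and holg: "g holomorphic_on ball 0 1" and h0: "h 0 = 0"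
    and dh: "\<forall>z\<in>ball 0 1. deriv h z \<noteq> 0"
    and s: "\<forall>z\<in>ball 0 1. h z + (cnj e)^2 * g z = (1 + of_real a) * z / (1 - e * z)"
    and w: "\<forall>z\<in>ball 0 1. deriv g z / deriv h z = e^2 * ((of_real a - z * e) / (1 - of_real a * z * e))"
  shows "\<forall>z\<in>ball 0 1. (\<lambda>n. (cnj e * of_real (Aco a n) * e^n) * z^n) sums h z"
     and "\<forall>z\<in>ball 0 1. (\<lambda>n. (e * of_real ((1+a)*e0 n - Aco a n) * e^n) * z^n) sums g z"
proof -
  have ce: "cnj e * e = 1" using unit_facts[OF e] .
  define Hc where "Hc = (\<lambda>z. cnj e * (of_real ((1-a)/2) * (e*z)/(1 - e*z)^2 + of_real ((1+a)/2) * (e*z)/(1 - e*z)))"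
  have der: "deriv h z = (1 - of_real a * (e*z)) / (1 - e*z)^3" if z: "z \<in> ball 0 1" for z
  proof -
    have u: "norm (e*z) < 1" using norm_mult_unit[OF e z] .
    have n1: "1 - e*z \<noteq> 0" using u by (metis norm_one order_less_irrefl right_minus_eq)
    have n2: "1 - of_real a * (e*z) \<noteq> 0"
    proof
      assume "1 - of_real a * (e*z) = 0"
      hence "norm (of_real a * (e*z)) = 1" by (metis norm_one right_minus_eq)
      moreover have "norm (of_real a * (e*z)) < 1"
      proof -
        have "\<bar>a\<bar> * norm (e*z) < 1 * 1" using u a by (intro mult_strict_mono') auto
        thus ?thesis by (simp add: norm_mult)
      qed
      ultimately show False by simp
    qed
    have n3: "1 + of_real a \<noteq> (0::complex)" using a by (metis add.commute add_eq_0_iff2 less_irrefl of_real_1 of_real_eq_iff of_real_minus)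
    have R: "((\<lambda>z. (1 + of_real a) * z / (1 - e * z)) has_field_derivative (1 + of_real a) / (1 - e*z)^2) (at z)"
      apply (rule derivative_eq_intros refl)+
      using n1 apply (simp_all add: divide_simps)
      apply algebra
      done
    have E1: "deriv h z + (cnj e)^2 * deriv g z = (1 + of_real a) / (1 - e*z)^2"
      by (rule deriv_from_eq[OF holh holg s R z])
    have E2: "deriv g z = e^2 * ((of_real a - z * e) / (1 - of_real a * z * e)) * deriv h z"
    proof -
      have "deriv g z / deriv h z = e^2 * ((of_real a - z * e) / (1 - of_real a * z * e))" using w z by blast
      moreover have "deriv h z \<noteq> 0" using dh z by blast
      ultimately show ?thesis by (simp add: divide_eq_eq)
    qed
    have "deriv h z * ((1 - of_real a * (e*z)) + (of_real a - e*z)) = (1 + of_real a) / (1 - e*z)^2 * (1 - of_real a * (e*z))"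
    proof -
      have "deriv h z * (1 + (cnj e)^2 * e^2 * ((of_real a - z * e) / (1 - of_real a * z * e))) = (1 + of_real a) / (1 - e*z)^2"
        using E1 E2 by (simp add: algebra_simps)
      moreover have "(cnj e)^2 * e^2 = 1" using ce by (metis power_mult_distrib power_one)
      ultimately have "deriv h z * (1 + ((of_real a - z * e) / (1 - of_real a * z * e))) = (1 + of_real a) / (1 - e*z)^2"
        by simp
      thus ?thesis using n1 n2 by (simp add: divide_simps algebra_simps split: if_splits)
    qed
    moreover have "(1 - of_real a * (e*z)) + (of_real a - e*z) = (1 + of_real a) * (1 - e*z)" by algebra
    ultimately have "deriv h z * ((1 + of_real a) * (1 - e*z)) = (1 + of_real a) / (1 - e*z)^2 * (1 - of_real a * (e*z))"
      by simp
    thus ?thesis using n1 n3 by (simp add: divide_simps) algebra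
  qed
  have dHc: "(Hc has_field_derivative (1 - of_real a * (e*z)) / (1 - e*z)^3) (at z)" if z: "z \<in> ball 0 1" for z
  proof -
    have u: "norm (e*z) < 1" using norm_mult_unit[OF e z] .
    have n1: "1 - e*z \<noteq> 0" using u by (metis norm_one order_less_irrefl right_minus_eq)
    have "((\<lambda>z. cnj e * (of_real ((1-a)/2) * ((\<lambda>u. u/(1-u)^2) (e*z)) + of_real ((1+a)/2) * ((\<lambda>u. u/(1-u)) (e*z))))
       has_field_derivative cnj e * (of_real ((1-a)/2) * ((1 + e*z)/(1-e*z)^3 * e) + of_real ((1+a)/2) * (1/(1-e*z)^2 * e))) (at z)"
      by (intro DERIV_cmult DERIV_add d_comp d_koebe d_geo u)
    moreover have "cnj e * (of_real ((1-a)/2) * ((1 + e*z)/(1-e*z)^3 * e) + of_real ((1+a)/2) * (1/(1-e*z)^2 * e))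
       = (1 - of_real a * (e*z)) / (1 - e*z)^3"
    proof -
      have "cnj e * (of_real ((1-a)/2) * ((1 + e*z)/(1-e*z)^3 * e) + of_real ((1+a)/2) * (1/(1-e*z)^2 * e))
         = (cnj e * e) * (of_real ((1-a)/2) * ((1 + e*z)/(1-e*z)^3) + of_real ((1+a)/2) * (1/(1-e*z)^2))"
        by (simp add: algebra_simps)
      also have "\<dots> = (of_real ((1-a)/2) * ((1 + e*z)/(1-e*z)^3) + of_real ((1+a)/2) * (1/(1-e*z)^2))" using ce by simp
      also have "\<dots> = (1 - of_real a * (e*z)) / (1 - e*z)^3"
        using n1 by (simp add: divide_simps) algebra
      finally show ?thesis .
    qed
    ultimately show ?thesis unfolding Hc_def by simp
  qed
  have hH: "\<forall>z\<in>ball 0 1. h z = Hc z"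
  proof (rule eq_from_deriv)
    show "\<forall>z\<in>ball 0 1. (h has_field_derivative (1 - of_real a * (e*z)) / (1 - e*z)^3) (at z)"
      using der holh by (metis holomorphic_derivI open_ball)
    show "\<forall>z\<in>ball 0 1. (Hc has_field_derivative (1 - of_real a * (e*z)) / (1 - e*z)^3) (at z)"
      using dHc by blast
    show "h 0 = Hc 0" using h0 by (simp add: Hc_def)
  qed
  show hs: "\<forall>z\<in>ball 0 1. (\<lambda>n. (cnj e * of_real (Aco a n) * e^n) * z^n) sums h z"
  proof
    fix z :: complex assume z: "z \<in> ball 0 1"
    have u: "norm (e*z) < 1" using norm_mult_unit[OF e z] .
    have "(\<lambda>n. cnj e * (of_real ((1-a)/2) * (of_nat n * (e*z)^n) + of_real ((1+a)/2) * (of_real (e0 n) * (e*z)^n)))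
        sums (cnj e * (of_real ((1-a)/2) * ((e*z)/(1 - e*z)^2) + of_real ((1+a)/2) * ((e*z)/(1 - e*z))))"
      by (intro sums_mult sums_add ser1 ser0 u)
    moreover have "(\<lambda>n. cnj e * (of_real ((1-a)/2) * (of_nat n * (e*z)^n) + of_real ((1+a)/2) * (of_real (e0 n) * (e*z)^n)))
       = (\<lambda>n. (cnj e * of_real (Aco a n) * e^n) * z^n)"
      unfolding Aco_def by (rule ext) (simp add: power_mult_distrib field_simps)
    moreover have "cnj e * (of_real ((1-a)/2) * ((e*z)/(1 - e*z)^2) + of_real ((1+a)/2) * ((e*z)/(1 - e*z))) = h z"
      using hH z by (simp add: Hc_def)
    ultimately show "(\<lambda>n. (cnj e * of_real (Aco a n) * e^n) * z^n) sums h z" by simp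
  qed
  show "\<forall>z\<in>ball 0 1. (\<lambda>n. (e * of_real ((1+a)*e0 n - Aco a n) * e^n) * z^n) sums g z"
  proof
    fix z :: complex assume z: "z \<in> ball 0 1"
    have u: "norm (e*z) < 1" using norm_mult_unit[OF e z] .
    have n1: "1 - e*z \<noteq> 0" using u by (metis norm_one order_less_irrefl right_minus_eq)
    have ge: "g z = e^2 * ((1 + of_real a) * z / (1 - e * z) - h z)"
    proof -
      have "h z + (cnj e)^2 * g z = (1 + of_real a) * z / (1 - e * z)" using s z by blast
      moreover have "e^2 * (cnj e)^2 = 1" using ce by (metis mult.commute power_mult_distrib power_one)
      ultimately show ?thesis by (metis (no_types, lifting) add_diff_cancel_left' mult.assoc mult_1)
    qed
    have Rs: "(\<lambda>n. e^2 * (cnj e * (1 + of_real a) * (of_real (e0 n) * (e*z)^n))) sums (e^2 * (cnj e * (1 + of_real a) * ((e*z)/(1 - e*z))))"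
      by (intro sums_mult ser0 u)
    have Hs: "(\<lambda>n. e^2 * ((cnj e * of_real (Aco a n) * e^n) * z^n)) sums (e^2 * h z)"
      using hs z by (intro sums_mult) blast
    have "(\<lambda>n. e^2 * (cnj e * (1 + of_real a) * (of_real (e0 n) * (e*z)^n)) - e^2 * ((cnj e * of_real (Aco a n) * e^n) * z^n))
        sums (e^2 * (cnj e * (1 + of_real a) * ((e*z)/(1 - e*z))) - e^2 * h z)"
      by (rule sums_diff[OF Rs Hs])
    moreover have "(\<lambda>n. e^2 * (cnj e * (1 + of_real a) * (of_real (e0 n) * (e*z)^n)) - e^2 * ((cnj e * of_real (Aco a n) * e^n) * z^n))
       = (\<lambda>n. (e * of_real ((1+a)*e0 n - Aco a n) * e^n) * z^n)"
    proof (rule ext)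
      fix n
      have "e^2 * (cnj e * (1 + of_real a) * (of_real (e0 n) * (e*z)^n)) - e^2 * ((cnj e * of_real (Aco a n) * e^n) * z^n)
        = (cnj e * e) * (e * ((1 + of_real a) * of_real (e0 n) - of_real (Aco a n)) * e^n * z^n)"
        by (simp add: power2_eq_square power_mult_distrib algebra_simps)
      thus "e^2 * (cnj e * (1 + of_real a) * (of_real (e0 n) * (e*z)^n)) - e^2 * ((cnj e * of_real (Aco a n) * e^n) * z^n)
        = (e * of_real ((1+a)*e0 n - Aco a n) * e^n) * z^n" using ce by simp
    qed
    moreover have "e^2 * (cnj e * (1 + of_real a) * ((e*z)/(1 - e*z))) - e^2 * h z = g z"
    proof -
      have "cnj e * (1 + of_real a) * ((e*z)/(1 - e*z)) = (cnj e * e) * ((1 + of_real a) * z / (1 - e*z))"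
        by (simp add: algebra_simps)
      hence "cnj e * (1 + of_real a) * ((e*z)/(1 - e*z)) = (1 + of_real a) * z / (1 - e*z)" by (metis ce mult.left_neutral)
      thus ?thesis using ge by (simp only: right_diff_distrib)
    qed
    ultimately show "(\<lambda>n. (e * of_real ((1+a)*e0 n - Aco a n) * e^n) * z^n) sums g z" by simp
  qed
qed

definition Cco :: "real \<Rightarrow> nat \<Rightarrow> real" where
  "Cco b n = ((1 + b) * e0 n + (1 - b) * oi n) / 2"

definition AT :: "complex \<Rightarrow> complex" where "AT u = (Ln (1 + u) - Ln (1 - u)) / 2"

lemma Re_pm_pos: assumes "norm (u::complex) < 1" shows "Re (1 + u) > 0" "Re (1 - u) > 0"
  using abs_Re_le_cmod[of u] assms by auto

lemma d_AT: assumes "norm (u::complex) < 1"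
  shows "(AT has_field_derivative (1/(1-u^2))) (at u)"
proof -
  have p: "1 + u \<notin> \<real>\<^sub>\<le>\<^sub>0" "1 - u \<notin> \<real>\<^sub>\<le>\<^sub>0"
    using Re_pm_pos[OF assms] by (auto simp: complex_nonpos_Reals_iff)
  have n: "1 + u \<noteq> 0" "1 - u \<noteq> 0" using Re_pm_pos[OF assms] by (metis zero_complex.sel(1) order_less_irrefl)+
  have "((\<lambda>u. (Ln (1 + u) - Ln (1 - u)) / 2) has_field_derivative ((inverse (1+u) * 1 - inverse (1-u) * (0 - 1)) / 2)) (at u)"
  proof -
    have d1: "((\<lambda>u. Ln (1+u)) has_field_derivative inverse (1+u) * 1) (at u)"
      by (rule DERIV_chain2[where g="\<lambda>u. 1+u" and f=Ln, OF has_field_derivative_Ln[OF p(1)]])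
         (auto intro!: derivative_eq_intros)
    have d2: "((\<lambda>u. Ln (1-u)) has_field_derivative inverse (1-u) * (0 - 1)) (at u)"
      by (rule DERIV_chain2[where g="\<lambda>u. 1-u" and f=Ln, OF has_field_derivative_Ln[OF p(2)]])
         (auto intro!: derivative_eq_intros)
    show ?thesis using DERIV_cdivide[OF DERIV_diff[OF d1 d2], of 2] by simp
  qed
  moreover have "(inverse (1+u) * 1 - inverse (1-u) * (0 - 1)) / 2 = 1/(1-u^2)"
    using n by (simp add: divide_simps) algebra
  ultimately show ?thesis unfolding AT_def by (rule DERIV_cong)
qed

lemma type2:
  fixes a :: real and e :: complex and h g :: "complex \<Rightarrow> complex"
  assumes e: "norm e = 1" and a: "-1 < a" "a < 1"
    and holh: "h holomorphic_on ball 0 1" and holg: "g holomorphic_on ball 0 1" and h0: "h 0 = 0"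
    and dh: "\<forall>z\<in>ball 0 1. deriv h z \<noteq> 0"
    and s: "\<forall>z\<in>ball 0 1. h z + (cnj e)^2 * g z = (1 + of_real a) * z / (1 - e * z)"
    and w: "\<forall>z\<in>ball 0 1. deriv g z / deriv h z = e^2 * ((of_real a + z * e) / (1 + of_real a * z * e))"
  shows "\<forall>z\<in>ball 0 1. (\<lambda>n. (cnj e * of_real (Cco a n) * e^n) * z^n) sums h z"
     and "\<forall>z\<in>ball 0 1. (\<lambda>n. (e * of_real ((1+a)*e0 n - Cco a n) * e^n) * z^n) sums g z"
proof -
  have ce: "cnj e * e = 1" using unit_facts[OF e] .
  define Hc where "Hc = (\<lambda>z. cnj e * (of_real ((1+a)/2) * ((e*z)/(1 - e*z)) + of_real ((1-a)/2) * AT (e*z)))"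
  have der: "deriv h z = (1 + of_real a * (e*z)) / ((1 + e*z) * (1 - e*z)^2)" if z: "z \<in> ball 0 1" for z
  proof -
    have u: "norm (e*z) < 1" using norm_mult_unit[OF e z] .
    have n1: "1 - e*z \<noteq> 0" using u by (metis norm_one order_less_irrefl right_minus_eq)
    have n4: "1 + e*z \<noteq> 0" using u by (metis add.inverse_unique norm_minus_cancel norm_one order_less_irrefl)
    have n2: "1 + of_real a * (e*z) \<noteq> 0"
    proof
      assume "1 + of_real a * (e*z) = 0"
      hence "norm (of_real a * (e*z)) = 1" by (metis add.inverse_unique norm_minus_cancel norm_one)
      moreover have "norm (of_real a * (e*z)) < 1"
      proof -
        have "\<bar>a\<bar> * norm (e*z) < 1 * 1" using u a by (intro mult_strict_mono') auto
        thus ?thesis by (simp add: norm_mult)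
      qed
      ultimately show False by simp
    qed
    have n3: "1 + of_real a \<noteq> (0::complex)" using a by (metis add.commute add_eq_0_iff2 less_irrefl of_real_1 of_real_eq_iff of_real_minus)
    have R: "((\<lambda>z. (1 + of_real a) * z / (1 - e * z)) has_field_derivative (1 + of_real a) / (1 - e*z)^2) (at z)"
      apply (rule derivative_eq_intros refl)+
      using n1 apply (simp_all add: divide_simps)
      apply algebra
      done
    have E1: "deriv h z + (cnj e)^2 * deriv g z = (1 + of_real a) / (1 - e*z)^2"
      by (rule deriv_from_eq[OF holh holg s R z])
    have E2: "deriv g z = e^2 * ((of_real a + z * e) / (1 + of_real a * z * e)) * deriv h z"
    proof -
      have "deriv g z / deriv h z = e^2 * ((of_real a + z * e) / (1 + of_real a * z * e))" using w z by blast
      moreover have "deriv h z \<noteq> 0" using dh z by blast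
      ultimately show ?thesis by (simp add: divide_eq_eq)
    qed
    have "deriv h z * ((1 + of_real a * (e*z)) + (of_real a + e*z)) = (1 + of_real a) / (1 - e*z)^2 * (1 + of_real a * (e*z))"
    proof -
      have "deriv h z * (1 + (cnj e)^2 * e^2 * ((of_real a + z * e) / (1 + of_real a * z * e))) = (1 + of_real a) / (1 - e*z)^2"
        using E1 E2 by (simp add: algebra_simps)
      moreover have "(cnj e)^2 * e^2 = 1" using ce by (metis power_mult_distrib power_one)
      ultimately have "deriv h z * (1 + ((of_real a + z * e) / (1 + of_real a * z * e))) = (1 + of_real a) / (1 - e*z)^2"
        by simp
      thus ?thesis using n1 n2 by (simp add: divide_simps algebra_simps split: if_splits)
    qed
    moreover have "(1 + of_real a * (e*z)) + (of_real a + e*z) = (1 + of_real a) * (1 + e*z)" by algebra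
    ultimately have "deriv h z * ((1 + of_real a) * (1 + e*z)) = (1 + of_real a) / (1 - e*z)^2 * (1 + of_real a * (e*z))"
      by simp
    thus ?thesis using n1 n3 n4 by (simp add: divide_simps)
  qed
  have dHc: "(Hc has_field_derivative (1 + of_real a * (e*z)) / ((1 + e*z) * (1 - e*z)^2)) (at z)" if z: "z \<in> ball 0 1" for z
  proof -
    have u: "norm (e*z) < 1" using norm_mult_unit[OF e z] .
    have n1: "1 - e*z \<noteq> 0" using u by (metis norm_one order_less_irrefl right_minus_eq)
    have n4: "1 + e*z \<noteq> 0" using u by (metis add.inverse_unique norm_minus_cancel norm_one order_less_irrefl)
    have "((\<lambda>z. cnj e * (of_real ((1+a)/2) * ((\<lambda>u. u/(1-u)) (e*z)) + of_real ((1-a)/2) * AT (e*z)))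
       has_field_derivative cnj e * (of_real ((1+a)/2) * (1/(1-e*z)^2 * e) + of_real ((1-a)/2) * (1/(1-(e*z)^2) * e))) (at z)"
      by (intro DERIV_cmult DERIV_add d_comp d_AT d_geo u)
    moreover have "cnj e * (of_real ((1+a)/2) * (1/(1-e*z)^2 * e) + of_real ((1-a)/2) * (1/(1-(e*z)^2) * e))
       = (1 + of_real a * (e*z)) / ((1 + e*z) * (1 - e*z)^2)"
    proof -
      have "cnj e * (of_real ((1+a)/2) * (1/(1-e*z)^2 * e) + of_real ((1-a)/2) * (1/(1-(e*z)^2) * e))
         = (cnj e * e) * (of_real ((1+a)/2) * (1/(1-e*z)^2) + of_real ((1-a)/2) * (1/(1-(e*z)^2)))"
        by (simp add: algebra_simps)
      also have "\<dots> = (of_real ((1+a)/2) * (1/(1-e*z)^2) + of_real ((1-a)/2) * (1/(1-(e*z)^2)))" using ce by simp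
      also have "\<dots> = (1 + of_real a * (e*z)) / ((1 + e*z) * (1 - e*z)^2)"
      proof -
        have "1 - (e*z)^2 = (1 - e*z) * (1 + e*z)" by algebra
        thus ?thesis using n1 n4 by (simp add: divide_simps) (simp add: algebra_simps power2_eq_square)
      qed
      finally show ?thesis .
    qed
    ultimately show ?thesis unfolding Hc_def by simp
  qed
  have hH: "\<forall>z\<in>ball 0 1. h z = Hc z"
  proof (rule eq_from_deriv)
    show "\<forall>z\<in>ball 0 1. (h has_field_derivative (1 + of_real a * (e*z)) / ((1 + e*z) * (1 - e*z)^2)) (at z)"
      using der holh by (metis holomorphic_derivI open_ball)
    show "\<forall>z\<in>ball 0 1. (Hc has_field_derivative (1 + of_real a * (e*z)) / ((1 + e*z) * (1 - e*z)^2)) (at z)"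
      using dHc by blast
    show "h 0 = Hc 0" using h0 by (simp add: Hc_def AT_def)
  qed
  show hs: "\<forall>z\<in>ball 0 1. (\<lambda>n. (cnj e * of_real (Cco a n) * e^n) * z^n) sums h z"
  proof
    fix z :: complex assume z: "z \<in> ball 0 1"
    have u: "norm (e*z) < 1" using norm_mult_unit[OF e z] .
    have "(\<lambda>n. cnj e * (of_real ((1+a)/2) * (of_real (e0 n) * (e*z)^n) + of_real ((1-a)/2) * (of_real (oi n) * (e*z)^n)))
        sums (cnj e * (of_real ((1+a)/2) * ((e*z)/(1 - e*z)) + of_real ((1-a)/2) * AT (e*z)))"
      unfolding AT_def by (intro sums_mult sums_add ser_oi ser0 u)
    moreover have "(\<lambda>n. cnj e * (of_real ((1+a)/2) * (of_real (e0 n) * (e*z)^n) + of_real ((1-a)/2) * (of_real (oi n) * (e*z)^n)))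
       = (\<lambda>n. (cnj e * of_real (Cco a n) * e^n) * z^n)"
      unfolding Cco_def by (rule ext) (simp add: power_mult_distrib field_simps)
    moreover have "cnj e * (of_real ((1+a)/2) * ((e*z)/(1 - e*z)) + of_real ((1-a)/2) * AT (e*z)) = h z"
      using hH z by (simp add: Hc_def)
    ultimately show "(\<lambda>n. (cnj e * of_real (Cco a n) * e^n) * z^n) sums h z" by simp
  qed
  show "\<forall>z\<in>ball 0 1. (\<lambda>n. (e * of_real ((1+a)*e0 n - Cco a n) * e^n) * z^n) sums g z"
  proof
    fix z :: complex assume z: "z \<in> ball 0 1"
    have u: "norm (e*z) < 1" using norm_mult_unit[OF e z] .
    have n1: "1 - e*z \<noteq> 0" using u by (metis norm_one order_less_irrefl right_minus_eq)
    have ge: "g z = e^2 * ((1 + of_real a) * z / (1 - e * z) - h z)"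
    proof -
      have "h z + (cnj e)^2 * g z = (1 + of_real a) * z / (1 - e * z)" using s z by blast
      moreover have "e^2 * (cnj e)^2 = 1" using ce by (metis mult.commute power_mult_distrib power_one)
      ultimately show ?thesis by (metis (no_types, lifting) add_diff_cancel_left' mult.assoc mult_1)
    qed
    have Rs: "(\<lambda>n. e^2 * (cnj e * (1 + of_real a) * (of_real (e0 n) * (e*z)^n))) sums (e^2 * (cnj e * (1 + of_real a) * ((e*z)/(1 - e*z))))"
      by (intro sums_mult ser0 u)
    have Hs: "(\<lambda>n. e^2 * ((cnj e * of_real (Cco a n) * e^n) * z^n)) sums (e^2 * h z)"
      using hs z by (intro sums_mult) blast
    have "(\<lambda>n. e^2 * (cnj e * (1 + of_real a) * (of_real (e0 n) * (e*z)^n)) - e^2 * ((cnj e * of_real (Cco a n) * e^n) * z^n))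
        sums (e^2 * (cnj e * (1 + of_real a) * ((e*z)/(1 - e*z))) - e^2 * h z)"
      by (rule sums_diff[OF Rs Hs])
    moreover have "(\<lambda>n. e^2 * (cnj e * (1 + of_real a) * (of_real (e0 n) * (e*z)^n)) - e^2 * ((cnj e * of_real (Cco a n) * e^n) * z^n))
       = (\<lambda>n. (e * of_real ((1+a)*e0 n - Cco a n) * e^n) * z^n)"
    proof (rule ext)
      fix n
      have "e^2 * (cnj e * (1 + of_real a) * (of_real (e0 n) * (e*z)^n)) - e^2 * ((cnj e * of_real (Cco a n) * e^n) * z^n)
        = (cnj e * e) * (e * ((1 + of_real a) * of_real (e0 n) - of_real (Cco a n)) * e^n * z^n)"
        by (simp add: power2_eq_square power_mult_distrib algebra_simps)
      thus "e^2 * (cnj e * (1 + of_real a) * (of_real (e0 n) * (e*z)^n)) - e^2 * ((cnj e * of_real (Cco a n) * e^n) * z^n)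
        = (e * of_real ((1+a)*e0 n - Cco a n) * e^n) * z^n" using ce by simp
    qed
    moreover have "e^2 * (cnj e * (1 + of_real a) * ((e*z)/(1 - e*z))) - e^2 * h z = g z"
    proof -
      have "cnj e * (1 + of_real a) * ((e*z)/(1 - e*z)) = (cnj e * e) * ((1 + of_real a) * z / (1 - e*z))"
        by (simp add: algebra_simps)
      hence "cnj e * (1 + of_real a) * ((e*z)/(1 - e*z)) = (1 + of_real a) * z / (1 - e*z)" by (metis ce mult.left_neutral)
      thus ?thesis using ge by (simp only: right_diff_distrib)
    qed
    ultimately show "(\<lambda>n. (e * of_real ((1+a)*e0 n - Cco a n) * e^n) * z^n) sums g z" by simp
  qed
qed

lemma realline_deriv:
  assumes "(f has_field_derivative D) (at (c + of_real t * d))"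
  shows "((\<lambda>t. f (c + of_real t * d)) has_vector_derivative (D * d)) (at t)"
proof -
  have "((\<lambda>s. f (c + s * d)) has_field_derivative D * d) (at (of_real t))"
  proof -
    have "((\<lambda>s. c + s * d) has_field_derivative d) (at (of_real t))" by (auto intro!: derivative_eq_intros)
    from DERIV_chain2[OF assms this] show ?thesis by simp
  qed
  from has_vector_derivative_real_field[OF this] show ?thesis by simp
qed

lemma inj_from_Re_deriv:
  assumes U: "convex U" and dP: "\<forall>w\<in>U. (P has_field_derivative P' w) (at w)"
    and A: "\<forall>w\<in>U. Re (P' w) > 0"
  shows "inj_on P U"
proof (rule inj_onI, rule ccontr)
  fix w1 w2 assume w: "w1 \<in> U" "w2 \<in> U" "P w1 = P w2" "w1 \<noteq> w2"
  define d where "d = w2 - w1"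
  have seg: "w1 + of_real t * d \<in> U" if "0 \<le> t" "t \<le> 1" for t
  proof -
    have "w1 + of_real t * d = (1 - t) *\<^sub>R w1 + t *\<^sub>R w2"
      by (simp add: d_def scaleR_conv_of_real algebra_simps)
    thus ?thesis using convexD[OF U w(1) w(2), of "1-t" t] that by simp
  qed
  define \<phi> where "\<phi> t = Re (P (w1 + of_real t * d) * cnj d)" for t
  have "\<phi> 0 < \<phi> 1"
  proof (rule DERIV_pos_imp_increasing[where f=\<phi>])
    fix t :: real assume t: "0 \<le> t" "t \<le> 1"
    have "((\<lambda>t. P (w1 + of_real t * d)) has_vector_derivative (P' (w1 + of_real t * d) * d)) (at t)"
      by (rule realline_deriv) (use dP seg t in blast)
    hence "((\<lambda>t. P (w1 + of_real t * d) * cnj d) has_vector_derivative (P' (w1 + of_real t * d) * d * cnj d)) (at t)"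
      by (auto intro!: derivative_eq_intros simp: has_vector_derivative_def scaleR_conv_of_real)
    hence "(\<phi> has_real_derivative Re (P' (w1 + of_real t * d) * d * cnj d)) (at t)"
      unfolding \<phi>_def by (rule has_field_derivative_Re)
    moreover have "Re (P' (w1 + of_real t * d) * d * cnj d) > 0"
    proof -
      define p where "p = P' (w1 + of_real t * d)"
      have "d * cnj d = of_real ((norm d)^2)" by (rule complex_norm_square[symmetric])
      hence eq: "p * d * cnj d = of_real ((norm d)^2) * p" by (simp add: mult.assoc mult.commute)
      have "Re (of_real ((norm d)^2) * p) = (norm d)^2 * Re p" by simp
      moreover have "d \<noteq> 0" using w by (simp add: d_def)
      moreover have "Re p > 0" using A seg[OF t] by (simp add: p_def)
      ultimately have "Re (p * d * cnj d) > 0" unfolding eq by simp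
      thus ?thesis by (simp only: p_def)
    qed
    ultimately show "\<exists>y. (\<phi> has_real_derivative y) (at t) \<and> 0 < y" by blast
  qed simp
  moreover have "\<phi> 0 = \<phi> 1" using w by (simp add: \<phi>_def d_def)
  ultimately show False by simp
qed

lemma Complex_eq_line: "Complex x t = of_real x + of_real t * \<i>"
  by (simp add: complex_eq_iff)

lemma vert_mono:
  assumes dP: "\<forall>w\<in>{w. Re w > 0}. (P has_field_derivative P' w) (at w)"
    and A: "\<forall>w\<in>{w. Re w > 0}. Re (P' w) > 0"
    and x: "x > 0" and y: "y1 < y2"
  shows "Im (P (Complex x y1)) < Im (P (Complex x y2))"
proof -
  define \<phi> where "\<phi> t = Im (P (of_real x + of_real t * \<i>))" for t
  have "\<phi> y1 < \<phi> y2"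
  proof (rule DERIV_pos_imp_increasing[where f=\<phi>, OF y])
    fix t :: real
    have w: "of_real x + of_real t * \<i> \<in> {w. Re w > 0}" using x by simp
    have "((\<lambda>t. P (of_real x + of_real t * \<i>)) has_vector_derivative (P' (of_real x + of_real t * \<i>) * \<i>)) (at t)"
      by (rule realline_deriv) (use dP w in blast)
    hence "(\<phi> has_real_derivative Im (P' (of_real x + of_real t * \<i>) * \<i>)) (at t)"
      unfolding \<phi>_def by (rule has_field_derivative_Im)
    moreover have "Im (P' (of_real x + of_real t * \<i>) * \<i>) > 0" using A w by simp
    ultimately show "\<exists>y. (\<phi> has_real_derivative y) (at t) \<and> 0 < y" by blast
  qed
  thus ?thesis by (simp add: \<phi>_def Complex_eq_line)
qed

lemma shear_RHP:
  fixes P S P' S' :: "complex \<Rightarrow> complex"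
  assumes dP: "\<forall>w\<in>{w. Re w > 0}. (P has_field_derivative P' w) (at w)"
    and dS: "\<forall>w\<in>{w. Re w > 0}. (S has_field_derivative S' w) (at w)"
    and A: "\<forall>w\<in>{w. Re w > 0}. Re (P' w) > 0"
    and B: "\<forall>x>0. \<forall>T. \<exists>y. Im (P (Complex x y)) = T"
    and C: "\<forall>w\<in>{w. Re w > 0}. Re (S' w / P' w) > 0"
  shows "inj_on (\<lambda>w. Complex (Re (S w)) (Im (P w))) {w. Re w > 0}"
    and "\<forall>T. convex ((\<lambda>w. Complex (Re (S w)) (Im (P w))) ` {w. Re w > 0} \<inter> {z. Im z = T})"
proof -
  define U where "U = {w::complex. Re w > 0}"
  define \<Phi> where "\<Phi> = (\<lambda>w. Complex (Re (S w)) (Im (P w)))"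
  have oU: "open U" unfolding U_def by (rule open_halfspace_Re_gt)
  have cU: "convex U" unfolding U_def by (rule convex_halfspace_Re_gt)
  have dP': "\<forall>w\<in>U. (P has_field_derivative P' w) (at w)" using dP U_def by simp
  have dS': "\<forall>w\<in>U. (S has_field_derivative S' w) (at w)" using dS U_def by simp
  have holP: "P holomorphic_on U"
    using dP' oU by (simp add: holomorphic_on_open field_differentiable_def) blast
  have injP: "inj_on P U" using inj_from_Re_deriv[OF cU dP'] A U_def by simp
  obtain Q where holQ: "Q holomorphic_on (P ` U)" and dQ: "\<And>z. z \<in> U \<Longrightarrow> deriv P z * deriv Q (P z) = 1"
    and QP: "\<And>z. z \<in> U \<Longrightarrow> Q (P z) = z"
    using holomorphic_has_inverse[OF holP oU injP] by metis
  have oPU: "open (P ` U)" by (rule open_mapping_thm3[OF holP oU injP])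
  have derP: "deriv P z = P' z" if "z \<in> U" for z using dP' that by (simp add: DERIV_imp_deriv)
  have contP: "continuous_on U P" by (rule holomorphic_on_imp_continuous_on[OF holP])
  have contS: "continuous_on U S"
    using dS' by (intro continuous_at_imp_continuous_on ballI) (meson DERIV_isCont)
  have main: "inj_on \<Phi> (U \<inter> {w. Im (P w) = T}) \<and> convex (\<Phi> ` U \<inter> {z. Im z = T})" for T
  proof -
    have mono: "Im (P (Complex x y1)) < Im (P (Complex x y2))" if "x > 0" "y1 < y2" for x y1 y2
      using vert_mono[OF dP A that] .
    have ex1: "\<exists>!y. Im (P (Complex x y)) = T" if x0: "x > 0" for x
    proof -
      obtain y where "Im (P (Complex x y)) = T" using B x0 by blast
      moreover have "y' = y" if "Im (P (Complex x y')) = T" "Im (P (Complex x y)) = T" for y'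
        using mono[OF \<open>x > 0\<close>, of y y'] mono[OF \<open>x > 0\<close>, of y' y] that by (cases "y < y'"; cases "y' < y") auto
      ultimately show ?thesis by blast
    qed
    define Y where "Y x = (THE y. Im (P (Complex x y)) = T)" for x
    have Y: "Im (P (Complex x (Y x))) = T" if "x > 0" for x
      unfolding Y_def using theI'[OF ex1[OF that]] .
    have Yu: "y = Y x" if "x > 0" "Im (P (Complex x y)) = T" for x y
      using ex1[OF that(1)] Y[OF that(1)] that(2) by blast
    have cIm: "isCont (\<lambda>x. Im (P (Complex x c))) x0" if "x0 > 0" for x0 c
    proof -
      have "isCont (\<lambda>x. Complex x c) x0" unfolding Complex_eq_line by (intro continuous_intros)
      moreover have "isCont P (Complex x0 c)"
      proof -
        have "Complex x0 c \<in> U" using that by (simp add: U_def)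
        thus ?thesis using dP' DERIV_isCont by blast
      qed
      ultimately have "isCont (\<lambda>x. P (Complex x c)) x0" by (rule isCont_o2)
      thus ?thesis unfolding isCont_def by (rule tendsto_Im)
    qed
    have contY: "continuous_on {0<..} Y"
    proof (intro continuous_at_imp_continuous_on ballI)
      fix x0 :: real assume "x0 \<in> {0<..}"
      hence x0: "x0 > 0" by simp
      show "isCont Y x0" unfolding isCont_def tendsto_iff
      proof (intro allI impI)
        fix e :: real assume e: "e > 0"
        define yp where "yp = Y x0 + e/2"
        define ym where "ym = Y x0 - e/2"
        have "T < Im (P (Complex x0 yp))" using mono[OF x0, of "Y x0" yp] Y[OF x0] e by (simp add: yp_def)
        hence ev1: "eventually (\<lambda>x. T < Im (P (Complex x yp))) (at x0)"
          using cIm[OF x0, of yp] unfolding isCont_def by (rule order_tendstoD(1)[rotated])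
        have "Im (P (Complex x0 ym)) < T" using mono[OF x0, of ym "Y x0"] Y[OF x0] e by (simp add: ym_def)
        hence ev2: "eventually (\<lambda>x. Im (P (Complex x ym)) < T) (at x0)"
          using cIm[OF x0, of ym] unfolding isCont_def by (rule order_tendstoD(2)[rotated])
        have ev3: "eventually (\<lambda>x. x > 0) (at x0)"
          using order_tendstoD(1)[OF tendsto_ident_at x0] by simp
        show "eventually (\<lambda>x. dist (Y x) (Y x0) < e) (at x0)"
          using ev1 ev2 ev3
        proof eventually_elim
          case (elim x)
          have "Y x < yp"
          proof (rule ccontr)
            assume "\<not> Y x < yp"
            hence "Im (P (Complex x yp)) \<le> Im (P (Complex x (Y x)))"
              using mono[OF elim(3), of yp "Y x"] by (cases "yp = Y x") auto
            thus False using Y[OF elim(3)] elim(1) by simp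
          qed
          moreover have "ym < Y x"
          proof (rule ccontr)
            assume "\<not> ym < Y x"
            hence "Im (P (Complex x (Y x))) \<le> Im (P (Complex x ym))"
              using mono[OF elim(3), of "Y x" ym] by (cases "ym = Y x") auto
            thus False using Y[OF elim(3)] elim(2) by simp
          qed
          ultimately show ?case using e by (simp add: yp_def ym_def dist_real_def abs_less_iff)
        qed
      qed
    qed
    define I where "I = (\<lambda>x. Re (P (Complex x (Y x)))) ` {0<..}"
    have connI: "connected I"
    proof -
      have "continuous_on {0<..} (\<lambda>x. Complex x (Y x))"
        using contY by (auto intro!: continuous_intros simp: Complex_eq_line)
      moreover have "(\<lambda>x. Complex x (Y x)) ` {0<..} \<subseteq> U" by (auto simp: U_def)
      ultimately have "continuous_on {0<..} (\<lambda>x. P (Complex x (Y x)))"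
        by (rule continuous_on_compose2[OF contP])
      hence "continuous_on {0<..} (\<lambda>x. Re (P (Complex x (Y x))))" by (intro continuous_intros)
      thus ?thesis unfolding I_def by (rule connected_continuous_image) simp
    qed
    have PI: "Re (P w) \<in> I" "P w = Complex (Re (P w)) T" if "w \<in> U" "Im (P w) = T" for w
    proof -
      have "Re w > 0" using that U_def by simp
      moreover have "w = Complex (Re w) (Im w)" by simp
      ultimately have "Im w = Y (Re w)" using Yu[of "Re w" "Im w"] that by simp
      hence eqw: "Complex (Re w) (Y (Re w)) = w" by (simp add: complex_eq_iff)
      show "Re (P w) \<in> I" unfolding I_def
        by (rule image_eqI[where x="Re w"]) (use \<open>Re w > 0\<close> eqw in simp_all)
      show "P w = Complex (Re (P w)) T" using that by (simp add: complex_eq_iff)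
    qed
    have IP: "Complex t T \<in> P ` U" if tI: "t \<in> I" for t
    proof -
      obtain x where x: "x > 0" "t = Re (P (Complex x (Y x)))" using tI I_def by auto
      have "P (Complex x (Y x)) = Complex t T" using x Y[OF x(1)] by (simp add: complex_eq_iff)
      moreover have "Complex x (Y x) \<in> U" using x by (simp add: U_def)
      ultimately show ?thesis by (metis image_eqI)
    qed
    define g where "g t = Re (S (Q (Complex t T)))" for t
    have dg: "(g has_real_derivative Re (S' (Q (Complex t T)) / P' (Q (Complex t T)))) (at t)" if tI: "t \<in> I" for t
    proof -
      obtain w where w: "w \<in> U" "Complex t T = P w" using IP[OF tI] by blast
      have Qw: "Q (Complex t T) = w" using w QP by simp
      have "(Q has_field_derivative deriv Q (Complex t T)) (at (Complex t T))"
        using holQ oPU IP[OF tI] by (meson holomorphic_derivI)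
      moreover have "deriv Q (Complex t T) = 1 / P' w"
      proof -
        have e1: "P' w * deriv Q (P w) = 1" using dQ[OF w(1)] derP[OF w(1)] by simp
        hence "P' w \<noteq> 0" by auto
        thus ?thesis using e1 w(2) by (simp add: eq_divide_eq mult.commute)
      qed
      ultimately have dQ': "(Q has_field_derivative 1 / P' w) (at (Complex t T))" by simp
      have "((\<lambda>z. S (Q z)) has_field_derivative S' w * (1 / P' w)) (at (Complex t T))"
        by (rule DERIV_chain2[OF _ dQ']) (use dS' w Qw in simp)
      hence "((\<lambda>z. S (Q z)) has_field_derivative S' w / P' w) (at (\<i> * of_real T + of_real t * 1))"
        by (simp add: Complex_eq_line mult.commute add.commute)
      from realline_deriv[OF this]
      have "((\<lambda>t. S (Q (\<i> * of_real T + of_real t * 1))) has_vector_derivative S' w / P' w * 1) (at t)" .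
      hence "((\<lambda>t. Re (S (Q (\<i> * of_real T + of_real t * 1)))) has_real_derivative Re (S' w / P' w * 1)) (at t)"
        by (rule has_field_derivative_Re)
      thus ?thesis unfolding g_def Qw by (simp add: Complex_eq_line mult.commute add.commute)
    qed
    have gpos: "Re (S' (Q (Complex t T)) / P' (Q (Complex t T))) > 0" if tI: "t \<in> I" for t
    proof -
      obtain w where "w \<in> U" "Complex t T = P w" using IP[OF tI] by blast
      hence "Q (Complex t T) \<in> U" using QP by simp
      thus ?thesis using C U_def by simp
    qed
    have gmono: "g t1 < g t2" if "t1 \<in> I" "t2 \<in> I" "t1 < t2" for t1 t2
    proof (rule DERIV_pos_imp_increasing[where f=g, OF that(3)])
      fix t assume t: "t1 \<le> t" "t \<le> t2"
      have "t \<in> I" using connI that t by (meson connected_contains_Icc atLeastAtMost_iff subsetD)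
      thus "\<exists>y. (g has_real_derivative y) (at t) \<and> 0 < y" using dg gpos by blast
    qed
    have inj: "inj_on \<Phi> (U \<inter> {w. Im (P w) = T})"
    proof (rule inj_onI)
      fix w1 w2 assume w: "w1 \<in> U \<inter> {w. Im (P w) = T}" "w2 \<in> U \<inter> {w. Im (P w) = T}" "\<Phi> w1 = \<Phi> w2"
      have g1: "g (Re (P w1)) = Re (S w1)" unfolding g_def using PI(2)[of w1] w QP by auto
      have g2: "g (Re (P w2)) = Re (S w2)" unfolding g_def using PI(2)[of w2] w QP by auto
      have "Re (S w1) = Re (S w2)" using w(3) by (simp add: \<Phi>_def complex_eq_iff)
      hence "Re (P w1) = Re (P w2)"
      proof -
        have i1: "Re (P w1) \<in> I" using PI(1)[of w1] w by blast
        have i2: "Re (P w2) \<in> I" using PI(1)[of w2] w by blast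
        show ?thesis using gmono[OF i1 i2] gmono[OF i2 i1] g1 g2 \<open>Re (S w1) = Re (S w2)\<close>
          by (cases "Re (P w1) < Re (P w2)"; cases "Re (P w2) < Re (P w1)") auto
      qed
      hence "P w1 = P w2" using w by (simp add: complex_eq_iff)
      thus "w1 = w2" using injP w by (meson IntD1 inj_onD)
    qed
    have img: "\<Phi> ` U \<inter> {z. Im z = T} = (\<lambda>t. Complex t T) ` (g ` I)"
    proof
      show "\<Phi> ` U \<inter> {z. Im z = T} \<subseteq> (\<lambda>t. Complex t T) ` (g ` I)"
      proof
        fix z assume "z \<in> \<Phi> ` U \<inter> {z. Im z = T}"
        then obtain w where w: "w \<in> U" "z = \<Phi> w" "Im (P w) = T" by (auto simp: \<Phi>_def)
        have "g (Re (P w)) = Re (S w)" unfolding g_def using PI(2)[of w] w QP by auto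
        hence "z = Complex (g (Re (P w))) T" using w by (simp add: \<Phi>_def)
        thus "z \<in> (\<lambda>t. Complex t T) ` (g ` I)" using PI(1)[OF w(1,3)] by blast
      qed
      show "(\<lambda>t. Complex t T) ` (g ` I) \<subseteq> \<Phi> ` U \<inter> {z. Im z = T}"
      proof
        fix z assume "z \<in> (\<lambda>t. Complex t T) ` (g ` I)"
        then obtain t where t: "t \<in> I" "z = Complex (g t) T" by blast
        obtain w where w: "w \<in> U" "Complex t T = P w" using IP[OF t(1)] by blast
        have "Q (Complex t T) = w" using w QP by simp
        hence gt: "g t = Re (S w)" by (simp add: g_def)
        have "Im (P w) = T" using w(2) by (metis complex.sel(2))
        hence "z = \<Phi> w" using t gt by (simp add: \<Phi>_def)
        thus "z \<in> \<Phi> ` U \<inter> {z. Im z = T}" using w t by (simp add: \<Phi>_def)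
      qed
    qed
    have "connected (g ` I)"
    proof (rule connected_continuous_image[OF _ connI])
      show "continuous_on I g"
        using dg by (intro continuous_at_imp_continuous_on ballI) (meson DERIV_isCont)
    qed
    hence cg: "convex (g ` I)" using is_interval_connected_1 is_interval_convex_1 by blast
    have "convex ((\<lambda>t. Complex t T) ` (g ` I))"
      unfolding convex_def
    proof (intro ballI allI impI)
      fix x y u v assume xy: "x \<in> (\<lambda>t. Complex t T) ` (g ` I)" "y \<in> (\<lambda>t. Complex t T) ` (g ` I)"
        and uv: "0 \<le> u" "0 \<le> v" "u + v = (1::real)"
      then obtain s1 s2 where s: "s1 \<in> g ` I" "s2 \<in> g ` I" "x = Complex s1 T" "y = Complex s2 T" by blast
      have "u * s1 + v * s2 \<in> g ` I" using convexD[OF cg s(1) s(2) uv] by simp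
      moreover have "u *\<^sub>R x + v *\<^sub>R y = Complex (u * s1 + v * s2) T"
      proof -
        have "u * T + v * T = T" using uv(3) by (metis distrib_right mult_1)
        thus ?thesis using s by (simp add: complex_eq_iff)
      qed
      ultimately show "u *\<^sub>R x + v *\<^sub>R y \<in> (\<lambda>t. Complex t T) ` (g ` I)" by blast
    qed
    thus ?thesis using inj img by simp
  qed
  show "inj_on (\<lambda>w. Complex (Re (S w)) (Im (P w))) {w. Re w > 0}"
  proof (rule inj_onI)
    fix w1 w2 assume w: "w1 \<in> {w. Re w > 0}" "w2 \<in> {w. Re w > 0}"
      "Complex (Re (S w1)) (Im (P w1)) = Complex (Re (S w2)) (Im (P w2))"
    hence "Im (P w1) = Im (P w2)" by simp
    thus "w1 = w2" using main[of "Im (P w1)"] w unfolding \<Phi>_def U_def by (auto dest: inj_onD)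
  qed
  show "\<forall>T. convex ((\<lambda>w. Complex (Re (S w)) (Im (P w))) ` {w. Re w > 0} \<inter> {z. Im z = T})"
    using main unfolding \<Phi>_def U_def by blast
qed

lemma Re_ofreal_mult: "Re (of_real r * z) = r * Re z"
  by simp

lemma Re_inv_pos: "Re w > 0 \<Longrightarrow> Re (1 / w) > 0"
  by (simp add: Re_divide divide_pos_pos sum_power2_gt_zero_iff)

definition S1 :: "real \<Rightarrow> real \<Rightarrow> complex \<Rightarrow> complex" where
  "S1 a b w = of_real ((1-a)*(1-b)) * (w^3 - w) / 8 + of_real ((1+a)*(1+b)) * (w - 1) / 4"
definition P1 :: "real \<Rightarrow> real \<Rightarrow> complex \<Rightarrow> complex" where
  "P1 a b w = of_real ((1-a)*(1+b) + (1-b)*(1+a)) * (w^2 - 1) / 8"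

lemma case1_geom:
  fixes a b :: real
  assumes a: "-1 < a" "a < 1" and b: "-1 < b" "b < 1" and c: "1 + 3*a + 3*b + a*b \<ge> 0"
  shows "inj_on (\<lambda>w. Complex (Re (S1 a b w)) (Im (P1 a b w))) {w. Re w > 0}"
    and "\<forall>T. convex ((\<lambda>w. Complex (Re (S1 a b w)) (Im (P1 a b w))) ` {w. Re w > 0} \<inter> {z. Im z = T})"
proof -
  define s where "s = (1-a)*(1+b) + (1-b)*(1+a)"
  define B where "B = (1-a)*(1-b)"
  define bb where "bb = (1+a)*(1+b)"
  have s: "s > 0"
  proof -
    have "s = 2 - 2*a*b" by (simp add: s_def algebra_simps)
    moreover have "a*b < 1" using a b by (smt (verit) mult_less_cancel_left1 mult_minus_left mult_less_cancel_right1 )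
    ultimately show ?thesis by simp
  qed
  have Bp: "B > 0" using a b by (simp add: B_def)
  have cc: "2*bb - B \<ge> 0" using c by (simp add: B_def bb_def algebra_simps)
  define S' where "S' w = of_real B * (3 * w^2 - 1) / 8 + of_real bb / 4" for w :: complex
  define P' where "P' w = of_real s * w / 4" for w :: complex
  have dP: "\<forall>w\<in>{w. Re w > 0}. (P1 a b has_field_derivative P' w) (at w)"
    unfolding P1_def P'_def s_def[symmetric]
    by (auto intro!: derivative_eq_intros simp: power2_eq_square algebra_simps)
  have dS: "\<forall>w\<in>{w. Re w > 0}. (S1 a b has_field_derivative S' w) (at w)"
    unfolding S1_def S'_def B_def[symmetric] bb_def[symmetric]
    by (auto intro!: derivative_eq_intros simp: power2_eq_square field_simps)
  have A: "\<forall>w\<in>{w. Re w > 0}. Re (P' w) > 0" using s by (simp add: P'_def)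
  have Bc: "\<forall>x>0. \<forall>T. \<exists>y. Im (P1 a b (Complex x y)) = T"
  proof (intro allI impI)
    fix x T :: real assume x: "x > 0"
    have im: "Im (P1 a b (Complex x y)) = s*x*y/4" for y
      unfolding P1_def s_def[symmetric] by (simp add: power2_eq_square)
    have "Im (P1 a b (Complex x (4*T/(s*x)))) = T"
      using x s unfolding im by (simp add: field_simps)
    thus "\<exists>y. Im (P1 a b (Complex x y)) = T" by blast
  qed
  have C: "\<forall>w\<in>{w. Re w > 0}. Re (S' w / P' w) > 0"
  proof
    fix w :: complex assume "w \<in> {w. Re w > 0}"
    hence w: "Re w > 0" by simp
    hence w0: "w \<noteq> 0" by auto
    have "S' w / P' w = of_real (3 * B / (2 * s)) * w + of_real ((2 * bb - B) / (2 * s)) * (1 / w)"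
      using w0 s by (simp add: S'_def P'_def field_simps power2_eq_square)
    moreover have "Re (of_real (3 * B / (2 * s)) * w) > 0" unfolding Re_ofreal_mult using w Bp s by simp
    moreover have "Re (of_real ((2 * bb - B) / (2 * s)) * (1 / w)) \<ge> 0"
      unfolding Re_ofreal_mult using Re_inv_pos[OF w] cc s by simp
    ultimately show "Re (S' w / P' w) > 0" by simp
  qed
  show "inj_on (\<lambda>w. Complex (Re (S1 a b w)) (Im (P1 a b w))) {w. Re w > 0}"
    by (rule shear_RHP(1)[OF dP dS A Bc C])
  show "\<forall>T. convex ((\<lambda>w. Complex (Re (S1 a b w)) (Im (P1 a b w))) ` {w. Re w > 0} \<inter> {z. Im z = T})"
    by (rule shear_RHP(2)[OF dP dS A Bc C])
qed

definition S2 :: "real \<Rightarrow> real \<Rightarrow> complex \<Rightarrow> complex" where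
  "S2 a b w = of_real ((1+a)*(1+b)) * (w - 1) / 4 + of_real ((1-a)*(1-b)) * (w - 1/w) / 8"
definition P2 :: "real \<Rightarrow> real \<Rightarrow> complex \<Rightarrow> complex" where
  "P2 a b w = of_real ((1-a)*(1+b)) * (w^2 - 1) / 8 + of_real ((1+a)*(1-b)) * Ln w / 4"

lemma case2_geom:
  fixes a b :: real
  assumes a: "-1 < a" "a < 1" and b: "-1 < b" "b < 1" and c: "1 + 3*a + 3*a*b + a^2*b > 0"
  shows "inj_on (\<lambda>w. Complex (Re (S2 a b w)) (Im (P2 a b w))) {w. Re w > 0}"
    and "\<forall>T. convex ((\<lambda>w. Complex (Re (S2 a b w)) (Im (P2 a b w))) ` {w. Re w > 0} \<inter> {z. Im z = T})"
proof -
  define B where "B = (1-a)*(1-b)"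
  define C where "C = (1-a)*(1+b)"
  define D where "D = (1+a)*(1-b)"
  define bb where "bb = (1+a)*(1+b)"
  define AA where "AA = 2*bb + B"
  have Bp: "B > 0" and Cp: "C > 0" and Dp: "D > 0" using a b by (simp_all add: B_def C_def D_def)
  have K: "AA*D - B*C > 0"
  proof -
    have "AA*D - B*C = 2*(1-b)*(1 + 3*a + 3*a*b + a^2*b)"
      by (simp add: AA_def B_def C_def D_def bb_def power2_eq_square algebra_simps)
    thus ?thesis using b c by simp
  qed
  define S' where "S' w = of_real bb / 4 + of_real B * (1 + 1/w^2) / 8" for w :: complex
  define P' where "P' w = of_real C * w / 4 + of_real D / (4 * w)" for w :: complex
  have dP: "\<forall>w\<in>{w. Re w > 0}. (P2 a b has_field_derivative P' w) (at w)"
  proof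
    fix w :: complex assume "w \<in> {w. Re w > 0}"
    hence w: "Re w > 0" by simp
    hence nw: "w \<notin> \<real>\<^sub>\<le>\<^sub>0" by (auto simp: complex_nonpos_Reals_iff)
    have w0: "w \<noteq> 0" using w by auto
    have "((\<lambda>w. of_real C * (w^2 - 1) / 8 + of_real D * Ln w / 4) has_field_derivative
          of_real C * (2 * w) / 8 + of_real D * inverse w / 4) (at w)"
      by (intro derivative_eq_intros has_field_derivative_Ln[OF nw]) (use nw in \<open>auto simp: power2_eq_square\<close>)
    moreover have "of_real C * (2 * w) / 8 + of_real D * inverse w / 4 = P' w"
      using w0 by (simp add: P'_def field_simps)
    ultimately show "(P2 a b has_field_derivative P' w) (at w)"
      unfolding P2_def C_def D_def by simp
  qed
  have dS: "\<forall>w\<in>{w. Re w > 0}. (S2 a b has_field_derivative S' w) (at w)"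
  proof
    fix w :: complex assume "w \<in> {w. Re w > 0}"
    hence w: "Re w > 0" by simp
    have w0: "w \<noteq> 0" using w by auto
    have f: "S2 a b = (\<lambda>w. of_real (bb/4) * (w - 1) + of_real (B/8) * (w - inverse w))"
      by (rule ext) (simp add: S2_def B_def bb_def field_simps)
    have "((\<lambda>w. of_real (bb/4) * (w - 1) + of_real (B/8) * (w - inverse w)) has_field_derivative
       of_real (bb/4) * (1 - 0) + of_real (B/8) * (1 - - (inverse w ^ Suc (Suc 0)))) (at w)"
      by (intro DERIV_add DERIV_cmult DERIV_diff DERIV_ident DERIV_const DERIV_inverse w0)
    moreover have "of_real (bb/4) * (1 - 0) + of_real (B/8) * (1 - - (inverse w ^ Suc (Suc 0))) = S' w"
      using w0 by (simp add: S'_def field_simps power2_eq_square)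
    ultimately show "(S2 a b has_field_derivative S' w) (at w)" unfolding f by simp
  qed
  have A: "\<forall>w\<in>{w. Re w > 0}. Re (P' w) > 0"
  proof
    fix w :: complex assume "w \<in> {w. Re w > 0}"
    hence w: "Re w > 0" by simp
    have "P' w = of_real (C/4) * w + of_real (D/4) * (1/w)"
      by (simp add: P'_def field_simps)
    moreover have "Re (of_real (C/4) * w) > 0" unfolding Re_ofreal_mult using Cp w by simp
    moreover have "Re (of_real (D/4) * (1/w)) > 0" unfolding Re_ofreal_mult using Dp Re_inv_pos[OF w] by simp
    ultimately show "Re (P' w) > 0" by simp
  qed
  have Bc: "\<forall>x>0. \<forall>T. \<exists>y. Im (P2 a b (Complex x y)) = T"
  proof (intro allI impI)
    fix x T :: real assume x: "x > 0"
    define f where "f y = Im (P2 a b (Complex x y))" for y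
    have fe: "f y = C*x*y/4 + D * Im (Ln (Complex x y)) / 4" for y
      by (simp add: f_def P2_def C_def D_def power2_eq_square)
    have L: "\<bar>Im (Ln (Complex x y))\<bar> < pi/2" for y
      using Re_Ln_pos_lt_imp[of "Complex x y"] x by simp
    define yp where "yp = (4*T + D*pi)/(C*x)"
    define ym where "ym = (4*T - D*pi)/(C*x)"
    have Cx: "C*x > 0" using Cp x by simp
    have "f ym \<le> T"
    proof -
      have "C*x*ym/4 = T - D*pi/4" using Cp x by (simp add: ym_def field_simps)
      moreover have "D * Im (Ln (Complex x ym)) \<le> D * pi/2"
        using mult_left_mono[of "Im (Ln (Complex x ym))" "pi/2" D] L[of ym] Dp by simp
      moreover have "D * pi > 0" using Dp by simp
      ultimately show ?thesis unfolding fe by linarith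
    qed
    moreover have "T \<le> f yp"
    proof -
      have "C*x*yp/4 = T + D*pi/4" using Cp x by (simp add: yp_def field_simps)
      moreover have "- (D * pi/2) \<le> D * Im (Ln (Complex x yp))"
        using mult_left_mono[of "-(pi/2)" "Im (Ln (Complex x yp))" D] L[of yp] Dp by simp
      moreover have "D * pi > 0" using Dp by simp
      ultimately show ?thesis unfolding fe by linarith
    qed
    moreover have "ym \<le> yp" using Cx Dp pi_gt_zero by (simp add: ym_def yp_def divide_right_mono)
    moreover have "continuous_on {ym..yp} f"
    proof (intro continuous_at_imp_continuous_on ballI)
      fix y assume "y \<in> {ym..yp}"
      have w: "of_real x + of_real y * \<i> \<in> {w. Re w > 0}" using x by simp
      have "((\<lambda>t. P2 a b (of_real x + of_real t * \<i>)) has_vector_derivative (P' (of_real x + of_real y * \<i>) * \<i>)) (at y)"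
        by (rule realline_deriv) (use dP w in blast)
      hence "(f has_real_derivative Im (P' (of_real x + of_real y * \<i>) * \<i>)) (at y)"
        unfolding f_def Complex_eq_line by (rule has_field_derivative_Im)
      thus "isCont f y" by (rule DERIV_isCont)
    qed
    ultimately obtain y where "f y = T" using IVT'[of f ym T yp] by blast
    thus "\<exists>y. Im (P2 a b (Complex x y)) = T" unfolding f_def by blast
  qed
  have C: "\<forall>w\<in>{w. Re w > 0}. Re (S' w / P' w) > 0"
  proof
    fix w :: complex assume "w \<in> {w. Re w > 0}"
    hence w: "Re w > 0" by simp
    have w0: "w \<noteq> 0" using w by auto
    define q where "q = of_real C * w + of_real D * (1/w)"
    have qp: "Re q > 0"
    proof -
      have "Re (of_real C * w) > 0" unfolding Re_ofreal_mult using Cp w by simp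
      moreover have "Re (of_real D * (1/w)) > 0" unfolding Re_ofreal_mult using Dp Re_inv_pos[OF w] by simp
      ultimately show ?thesis by (simp add: q_def)
    qed
    have q0: "q \<noteq> 0" using qp by auto
    have qw: "of_real C * w^2 + of_real D = q * w" using w0 by (simp add: q_def field_simps power2_eq_square)
    have n: "of_real C * w^2 + of_real D \<noteq> 0" using qw q0 w0 by simp
    have s1: "S' w = (of_real AA * w^2 + of_real B) / (8 * w^2)"
      using w0 by (simp add: S'_def AA_def field_simps power2_eq_square)
    have p1: "P' w = (of_real C * w^2 + of_real D) / (4 * w)"
      using w0 by (simp add: P'_def field_simps power2_eq_square)
    have gen: "(X / (8 * w^2)) / (Y / (4 * w)) = X / (2 * w * Y)" if "Y \<noteq> 0" for X Y :: complex
      using w0 that by (simp add: field_simps power2_eq_square)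
    have "S' w / P' w = (of_real AA * w^2 + of_real B) / (2 * w * (of_real C * w^2 + of_real D))"
      unfolding s1 p1 by (rule gen[OF n])
    also have "\<dots> = of_real (B/(2*D)) * (1/w) + of_real ((AA*D - B*C)/(2*D)) * (1/q)"
    proof -
      define Y where "Y = of_real C * w^2 + of_real D"
      have Y0: "Y \<noteq> 0" using n by (simp add: Y_def)
      have D0: "(of_real D :: complex) \<noteq> 0" using Dp by simp
      have iq: "1/q = w/Y" using qw w0 q0 by (simp add: Y_def field_simps)
      have r1: "of_real (B/(2*D)) * (1/w) + of_real ((AA*D - B*C)/(2*D)) * (w/Y)
          = (of_real B * Y + of_real (AA*D - B*C) * w^2) / (2 * of_real D * w * Y)"
        using w0 Y0 D0 by (simp add: field_simps power2_eq_square)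
      have r2: "of_real B * Y + of_real (AA*D - B*C) * w^2 = of_real D * (of_real AA * w^2 + of_real B)"
        by (simp add: Y_def algebra_simps)
      have r3: "(of_real D * (of_real AA * w^2 + of_real B)) / (2 * of_real D * w * Y) = (of_real AA * w^2 + of_real B) / (2 * w * Y)"
        using D0 by simp
      have "of_real (B/(2*D)) * (1/w) + of_real ((AA*D - B*C)/(2*D)) * (1/q)
          = (of_real AA * w^2 + of_real B) / (2 * w * Y)" unfolding iq r1 r2 r3 ..
      thus ?thesis by (simp add: Y_def)
    qed
    finally have eq: "S' w / P' w = of_real (B/(2*D)) * (1/w) + of_real ((AA*D - B*C)/(2*D)) * (1/q)" .
    have "Re (of_real (B/(2*D)) * (1/w)) > 0" unfolding Re_ofreal_mult using Bp Dp Re_inv_pos[OF w] by simp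
    moreover have "Re (of_real ((AA*D - B*C)/(2*D)) * (1/q)) > 0" unfolding Re_ofreal_mult using K Dp Re_inv_pos[OF qp] by simp
    ultimately show "Re (S' w / P' w) > 0" unfolding eq by simp
  qed
  show "inj_on (\<lambda>w. Complex (Re (S2 a b w)) (Im (P2 a b w))) {w. Re w > 0}"
    by (rule shear_RHP(1)[OF dP dS A Bc C])
  show "\<forall>T. convex ((\<lambda>w. Complex (Re (S2 a b w)) (Im (P2 a b w))) ` {w. Re w > 0} \<inter> {z. Im z = T})"
    by (rule shear_RHP(2)[OF dP dS A Bc C])
qed

definition W :: "complex \<Rightarrow> complex" where "W u = (1 + u) / (1 - u)"

lemma W_facts:
  assumes "norm (u::complex) < 1"
  shows "u/(1-u) = (W u - 1)/2" "u/(1-u)^2 = (W u^2 - 1)/4"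
    "u*(1+u)/(1-u)^3 = (W u^3 - W u)/4" "u/(1-u^2) = (W u - 1/W u)/4"
    "AT u = Ln (W u) / 2" "Re (W u) > 0"
proof -
  have n1: "1 - u \<noteq> 0" "1 + u \<noteq> 0" using Re_pm_pos[OF assms] by (metis zero_complex.sel(1) order_less_irrefl)+
  show "u/(1-u) = (W u - 1)/2" using n1 by (simp add: W_def field_simps)
  show "u/(1-u)^2 = (W u^2 - 1)/4" using n1 by (simp add: W_def divide_simps) algebra
  show "u*(1+u)/(1-u)^3 = (W u^3 - W u)/4" using n1 by (simp add: W_def divide_simps) algebra
  show "u/(1-u^2) = (W u - 1/W u)/4"
  proof -
    have "1 - u^2 = (1-u)*(1+u)" by algebra
    thus ?thesis using n1 by (simp add: W_def divide_simps) (simp add: algebra_simps)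
  qed
  show "Re (W u) > 0"
  proof -
    have "W u = (1 + u) * cnj (1 - u) / of_real ((norm (1 - u))^2)"
    proof -
      have c0: "cnj (1 - u) \<noteq> 0" using n1 by simp
      have "W u = (1 + u) * cnj (1 - u) / ((1 - u) * cnj (1 - u))"
        unfolding W_def using c0 by simp
      also have "(1 - u) * cnj (1 - u) = of_real ((norm (1 - u))^2)" by (rule complex_norm_square[symmetric])
      finally show ?thesis .
    qed
    moreover have "Re ((1 + u) * cnj (1 - u)) = 1 - (norm u)^2"
      using cmod_power2[of u] by (simp add: algebra_simps power2_eq_square)
    moreover have "1 - (norm u)^2 > 0" using assms by (simp add: power_less_one_iff abs_square_less_1)
    moreover have "(norm (1 - u))^2 > 0" using n1 by simp
    ultimately show ?thesis by (simp add: Re_divide_of_real)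
  qed
  show "AT u = Ln (W u) / 2"
  proof -
    have p: "Re (1 + u) > 0" "Re (1 - u) > 0" using Re_pm_pos[OF assms] by auto
    have "Ln (W u) = Ln (1 + u) - Ln (1 - u)"
    proof (rule Ln_unique)
      show "exp (Ln (1 + u) - Ln (1 - u)) = W u" using n1 by (simp add: exp_diff W_def)
      have "\<bar>Im (Ln (1 + u))\<bar> < pi/2" "\<bar>Im (Ln (1 - u))\<bar> < pi/2" using Re_Ln_pos_lt_imp p by auto
      thus "- pi < Im (Ln (1 + u) - Ln (1 - u))" "Im (Ln (1 + u) - Ln (1 - u)) \<le> pi" by auto
    qed
    thus ?thesis by (simp add: AT_def)
  qed
qed

lemma coef1:
  "Aco a n * Aco b n = ((1-a)*(1-b)*(real n)^2 + ((1-a)*(1+b) + (1-b)*(1+a)) * real n + (1+a)*(1+b) * e0 n) / 4"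
  "((1+a)*e0 n - Aco a n) * ((1+b)*e0 n - Aco b n) = ((1-a)*(1-b)*(real n)^2 - ((1-a)*(1+b) + (1-b)*(1+a)) * real n + (1+a)*(1+b) * e0 n) / 4"
  by (cases "n = 0"; simp add: Aco_def e0_def field_simps power2_eq_square)+

lemma coef2:
  "Aco a n * Cco b n = ((1-a)*(1+b)*real n + (1-a)*(1-b)* od n + (1+a)*(1+b)*e0 n + (1+a)*(1-b)* oi n) / 4"
  "((1+a)*e0 n - Aco a n) * ((1+b)*e0 n - Cco b n) = (- (1-a)*(1+b)*real n + (1-a)*(1-b)* od n + (1+a)*(1+b)*e0 n - (1+a)*(1-b)* oi n) / 4"
  by (cases "n = 0"; cases "odd n"; simp add: Aco_def Cco_def e0_def od_def oi_def field_simps)+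

lemma had1:
  assumes u: "norm (u::complex) < 1"
  shows "(\<lambda>n. of_real (Aco a n * Aco b n) * u^n) sums ((S1 a b (W u) + P1 a b (W u)) / 2)"
    and "(\<lambda>n. of_real (((1+a)*e0 n - Aco a n) * ((1+b)*e0 n - Aco b n)) * u^n) sums ((S1 a b (W u) - P1 a b (W u)) / 2)"
proof -
  define s where "s = (1-a)*(1+b) + (1-b)*(1+a)"
  have b2: "(\<lambda>n. of_real ((1-a)*(1-b)/4) * (of_nat n ^ 2 * u^n)) sums (of_real ((1-a)*(1-b)/4) * (u * (1 + u) / (1 - u)^3))"
    by (intro sums_mult ser2 u)
  have b1: "(\<lambda>n. of_real (s/4) * (of_nat n * u^n)) sums (of_real (s/4) * (u / (1 - u)^2))"
    by (intro sums_mult ser1 u)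
  have b0: "(\<lambda>n. of_real ((1+a)*(1+b)/4) * (of_real (e0 n) * u^n)) sums (of_real ((1+a)*(1+b)/4) * (u / (1 - u)))"
    by (intro sums_mult ser0 u)
  have vS: "S1 a b (W u) = of_real ((1-a)*(1-b)/4) * (u * (1 + u) / (1 - u)^3) * 2 + of_real ((1+a)*(1+b)/4) * (u / (1 - u)) * 2"
    unfolding W_facts[OF u] S1_def by (simp add: field_simps)
  have vP: "P1 a b (W u) = of_real (s/4) * (u / (1 - u)^2) * 2"
    unfolding W_facts[OF u] P1_def s_def by (simp add: field_simps)
  show "(\<lambda>n. of_real (Aco a n * Aco b n) * u^n) sums ((S1 a b (W u) + P1 a b (W u)) / 2)"
  proof -
    have "(\<lambda>n. of_real ((1-a)*(1-b)/4) * (of_nat n ^ 2 * u^n) + of_real (s/4) * (of_nat n * u^n) + of_real ((1+a)*(1+b)/4) * (of_real (e0 n) * u^n))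
      sums (of_real ((1-a)*(1-b)/4) * (u * (1 + u) / (1 - u)^3) + of_real (s/4) * (u / (1 - u)^2) + of_real ((1+a)*(1+b)/4) * (u / (1 - u)))"
      by (intro sums_add b0 b1 b2)
    moreover have fe: "(\<lambda>n. of_real ((1-a)*(1-b)/4) * (of_nat n ^ 2 * u^n) + of_real (s/4) * (of_nat n * u^n) + of_real ((1+a)*(1+b)/4) * (of_real (e0 n) * u^n))
       = (\<lambda>n. of_real (Aco a n * Aco b n) * u^n)"
      unfolding coef1 by (rule ext) (simp add: s_def field_simps)
    moreover have ve: "of_real ((1-a)*(1-b)/4) * (u * (1 + u) / (1 - u)^3) + of_real (s/4) * (u / (1 - u)^2) + of_real ((1+a)*(1+b)/4) * (u / (1 - u))
       = (S1 a b (W u) + P1 a b (W u)) / 2"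
      unfolding vS vP by (simp add: field_simps)
    ultimately show ?thesis by (simp only: fe ve)
  qed
  show "(\<lambda>n. of_real (((1+a)*e0 n - Aco a n) * ((1+b)*e0 n - Aco b n)) * u^n) sums ((S1 a b (W u) - P1 a b (W u)) / 2)"
  proof -
    have "(\<lambda>n. of_real ((1-a)*(1-b)/4) * (of_nat n ^ 2 * u^n) - of_real (s/4) * (of_nat n * u^n) + of_real ((1+a)*(1+b)/4) * (of_real (e0 n) * u^n))
      sums (of_real ((1-a)*(1-b)/4) * (u * (1 + u) / (1 - u)^3) - of_real (s/4) * (u / (1 - u)^2) + of_real ((1+a)*(1+b)/4) * (u / (1 - u)))"
      by (intro sums_add sums_diff b0 b1 b2)
    moreover have fe: "(\<lambda>n. of_real ((1-a)*(1-b)/4) * (of_nat n ^ 2 * u^n) - of_real (s/4) * (of_nat n * u^n) + of_real ((1+a)*(1+b)/4) * (of_real (e0 n) * u^n))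
       = (\<lambda>n. of_real (((1+a)*e0 n - Aco a n) * ((1+b)*e0 n - Aco b n)) * u^n)"
      unfolding coef1 by (rule ext) (simp add: s_def field_simps)
    moreover have ve: "of_real ((1-a)*(1-b)/4) * (u * (1 + u) / (1 - u)^3) - of_real (s/4) * (u / (1 - u)^2) + of_real ((1+a)*(1+b)/4) * (u / (1 - u))
       = (S1 a b (W u) - P1 a b (W u)) / 2"
      unfolding vS vP by (simp add: field_simps)
    ultimately show ?thesis by (simp only: fe ve)
  qed
qed

lemma had2:
  assumes u: "norm (u::complex) < 1"
  shows "(\<lambda>n. of_real (Aco a n * Cco b n) * u^n) sums ((S2 a b (W u) + P2 a b (W u)) / 2)"
    and "(\<lambda>n. of_real (((1+a)*e0 n - Aco a n) * ((1+b)*e0 n - Cco b n)) * u^n) sums ((S2 a b (W u) - P2 a b (W u)) / 2)"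
proof -
  define B where "B = (1-a)*(1-b)"
  define C where "C = (1-a)*(1+b)"
  define D where "D = (1+a)*(1-b)"
  define bb where "bb = (1+a)*(1+b)"
  have b1: "(\<lambda>n. of_real (C/4) * (of_nat n * u^n)) sums (of_real (C/4) * (u / (1 - u)^2))"
    by (intro sums_mult ser1 u)
  have bo: "(\<lambda>n. of_real (B/4) * (of_real (od n) * u^n)) sums (of_real (B/4) * (u / (1 - u^2)))"
    by (intro sums_mult ser_od u)
  have b0: "(\<lambda>n. of_real (bb/4) * (of_real (e0 n) * u^n)) sums (of_real (bb/4) * (u / (1 - u)))"
    by (intro sums_mult ser0 u)
  have bi: "(\<lambda>n. of_real (D/4) * (of_real (oi n) * u^n)) sums (of_real (D/4) * AT u)"
    unfolding AT_def by (intro sums_mult ser_oi u)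
  have vS: "S2 a b (W u) = of_real (bb/4) * (u / (1 - u)) * 2 + of_real (B/4) * (u / (1 - u^2)) * 2"
    unfolding W_facts[OF u] S2_def B_def bb_def by (simp add: field_simps)
  have vP: "P2 a b (W u) = of_real (C/4) * (u / (1 - u)^2) * 2 + of_real (D/4) * AT u * 2"
    unfolding W_facts[OF u] P2_def C_def D_def by (simp add: field_simps)
  show "(\<lambda>n. of_real (Aco a n * Cco b n) * u^n) sums ((S2 a b (W u) + P2 a b (W u)) / 2)"
  proof -
    have "(\<lambda>n. of_real (C/4) * (of_nat n * u^n) + of_real (B/4) * (of_real (od n) * u^n) + of_real (bb/4) * (of_real (e0 n) * u^n) + of_real (D/4) * (of_real (oi n) * u^n))
      sums (of_real (C/4) * (u / (1 - u)^2) + of_real (B/4) * (u / (1 - u^2)) + of_real (bb/4) * (u / (1 - u)) + of_real (D/4) * AT u)"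
      by (intro sums_add b0 b1 bo bi)
    moreover have fe: "(\<lambda>n. of_real (C/4) * (of_nat n * u^n) + of_real (B/4) * (of_real (od n) * u^n) + of_real (bb/4) * (of_real (e0 n) * u^n) + of_real (D/4) * (of_real (oi n) * u^n))
       = (\<lambda>n. of_real (Aco a n * Cco b n) * u^n)"
      unfolding coef2 by (rule ext) (simp add: B_def C_def D_def bb_def field_simps)
    moreover have ve: "of_real (C/4) * (u / (1 - u)^2) + of_real (B/4) * (u / (1 - u^2)) + of_real (bb/4) * (u / (1 - u)) + of_real (D/4) * AT u
       = (S2 a b (W u) + P2 a b (W u)) / 2"
      unfolding vS vP by (simp add: field_simps)
    ultimately show ?thesis by (simp only: fe ve)
  qed
  show "(\<lambda>n. of_real (((1+a)*e0 n - Aco a n) * ((1+b)*e0 n - Cco b n)) * u^n) sums ((S2 a b (W u) - P2 a b (W u)) / 2)"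
  proof -
    have "(\<lambda>n. - (of_real (C/4) * (of_nat n * u^n)) + of_real (B/4) * (of_real (od n) * u^n) + of_real (bb/4) * (of_real (e0 n) * u^n) - of_real (D/4) * (of_real (oi n) * u^n))
      sums (- (of_real (C/4) * (u / (1 - u)^2)) + of_real (B/4) * (u / (1 - u^2)) + of_real (bb/4) * (u / (1 - u)) - of_real (D/4) * AT u)"
      by (intro sums_add sums_diff sums_minus b0 b1 bo bi)
    moreover have fe: "(\<lambda>n. - (of_real (C/4) * (of_nat n * u^n)) + of_real (B/4) * (of_real (od n) * u^n) + of_real (bb/4) * (of_real (e0 n) * u^n) - of_real (D/4) * (of_real (oi n) * u^n))
       = (\<lambda>n. of_real (((1+a)*e0 n - Aco a n) * ((1+b)*e0 n - Cco b n)) * u^n)"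
      unfolding coef2 by (rule ext) (simp add: B_def C_def D_def bb_def field_simps)
    moreover have ve: "- (of_real (C/4) * (u / (1 - u)^2)) + of_real (B/4) * (u / (1 - u^2)) + of_real (bb/4) * (u / (1 - u)) - of_real (D/4) * AT u
       = (S2 a b (W u) - P2 a b (W u)) / 2"
      unfolding vS vP by (simp add: field_simps)
    ultimately show ?thesis by (simp only: fe ve)
  qed
qed

lemma W_inj: "norm u1 < 1 \<Longrightarrow> norm u2 < 1 \<Longrightarrow> W u1 = W u2 \<Longrightarrow> u1 = u2"
proof -
  assume u: "norm u1 < 1" "norm u2 < 1" "W u1 = W u2"
  have n: "1 - u1 \<noteq> 0" "1 - u2 \<noteq> 0" using u(1,2) by auto
  hence "(1 + u1) * (1 - u2) = (1 + u2) * (1 - u1)" using u(3) by (simp add: W_def divide_simps)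
  thus ?thesis by algebra
qed

lemma W_surj: assumes "Re w > 0" shows "norm ((w - 1)/(w + 1)) < 1" "W ((w - 1)/(w + 1)) = w"
proof -
  have "Re (w + 1) > 0" using assms by simp
  hence w1: "w + 1 \<noteq> 0" by (metis zero_complex.sel(1) order_less_irrefl)
  have e1: "(norm (w - 1))^2 = (Re w - 1)^2 + (Im w)^2" by (simp add: cmod_power2)
  have e2: "(norm (w + 1))^2 = (Re w + 1)^2 + (Im w)^2" by (simp add: cmod_power2)
  have "(norm (w - 1))^2 < (norm (w + 1))^2"
    unfolding e1 e2 using assms by (simp add: power2_eq_square algebra_simps)
  hence "norm (w - 1) < norm (w + 1)" by (simp add: power_less_imp_less_base)
  thus "norm ((w - 1)/(w + 1)) < 1" using w1 by (simp add: norm_divide divide_less_eq)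
  show "W ((w - 1)/(w + 1)) = w" using w1 by (simp add: W_def divide_simps)
qed

lemma final_assembly:
  fixes E :: complex and S P h1 g1 h2 g2 :: "complex \<Rightarrow> complex" and cA cB :: "nat \<Rightarrow> real"
  assumes E: "norm E = 1" and G: "cis G = E"
    and th: "\<forall>n. taylor_coeff h1 n * taylor_coeff h2 n = cnj E * of_real (cA n) * E^n"
    and tg: "\<forall>n. taylor_coeff g1 n * taylor_coeff g2 n = E * of_real (cB n) * E^n"
    and sA: "\<forall>u. norm u < 1 \<longrightarrow> (\<lambda>n. of_real (cA n) * u^n) sums ((S (W u) + P (W u))/2)"
    and sB: "\<forall>u. norm u < 1 \<longrightarrow> (\<lambda>n. of_real (cB n) * u^n) sums ((S (W u) - P (W u))/2)"
    and inj: "inj_on (\<lambda>w. Complex (Re (S w)) (Im (P w))) {w. Re w > 0}"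
    and cvx: "\<forall>T. convex ((\<lambda>w. Complex (Re (S w)) (Im (P w))) ` {w. Re w > 0} \<inter> {z. Im z = T})"
  shows "inj_on (harm_conv h1 g1 h2 g2) unit_disk \<and> convex_in_direction (harm_conv h1 g1 h2 g2) (- G)"
proof -
  define \<Phi> where "\<Phi> = (\<lambda>w. Complex (Re (S w)) (Im (P w)))"
  define F where "F = harm_conv h1 g1 h2 g2"
  have ce: "cnj E * E = 1" using unit_facts[OF E] .
  have Ez: "norm (E * z) < 1" if "z \<in> unit_disk" for z using that E by (simp add: unit_disk_def norm_mult)
  have Fz: "F z = cnj E * \<Phi> (W (E * z))" if z: "z \<in> unit_disk" for z
  proof -
    have u: "norm (E * z) < 1" using Ez[OF z] .
    have "(\<lambda>n. cnj E * (of_real (cA n) * (E * z)^n)) sums (cnj E * ((S (W (E*z)) + P (W (E*z)))/2))"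
      using sA u by (intro sums_mult) blast
    moreover have "(\<lambda>n. cnj E * (of_real (cA n) * (E * z)^n)) = (\<lambda>n. taylor_coeff h1 n * taylor_coeff h2 n * z^n)"
      using th by (auto simp: fun_eq_iff power_mult_distrib algebra_simps)
    ultimately have hh: "hadamard h1 h2 z = cnj E * ((S (W (E*z)) + P (W (E*z)))/2)"
      unfolding hadamard_def by (simp add: sums_iff)
    have "(\<lambda>n. E * (of_real (cB n) * (E * z)^n)) sums (E * ((S (W (E*z)) - P (W (E*z)))/2))"
      using sB u by (intro sums_mult) blast
    moreover have "(\<lambda>n. E * (of_real (cB n) * (E * z)^n)) = (\<lambda>n. taylor_coeff g1 n * taylor_coeff g2 n * z^n)"
      using tg by (auto simp: fun_eq_iff power_mult_distrib algebra_simps)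
    ultimately have gg: "hadamard g1 g2 z = E * ((S (W (E*z)) - P (W (E*z)))/2)"
      unfolding hadamard_def by (simp add: sums_iff)
    define A where "A = S (W (E*z))"
    define B where "B = P (W (E*z))"
    have c: "(A + B)/2 + cnj ((A - B)/2) = Complex (Re A) (Im B)" by (simp add: complex_eq_iff field_simps)
    have "F z = cnj E * ((A + B)/2) + cnj (E * ((A - B)/2))"
      unfolding F_def harm_conv_def hh gg A_def B_def by simp
    also have "\<dots> = cnj E * ((A + B)/2 + cnj ((A - B)/2))" by (simp only: complex_cnj_mult distrib_left)
    also have "\<dots> = cnj E * \<Phi> (W (E * z))" unfolding c by (simp add: \<Phi>_def A_def B_def)
    finally show ?thesis .
  qed
  have WD: "W (E * z) \<in> {w. Re w > 0}" if "z \<in> unit_disk" for z using W_facts(6)[OF Ez[OF that]] by simp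
  have injF: "inj_on F unit_disk"
  proof (rule inj_onI)
    fix z1 z2 assume z: "z1 \<in> unit_disk" "z2 \<in> unit_disk" "F z1 = F z2"
    have "cnj E \<noteq> 0" using E by auto
    hence "\<Phi> (W (E * z1)) = \<Phi> (W (E * z2))" using z Fz by simp
    hence "W (E * z1) = W (E * z2)" using inj WD z unfolding \<Phi>_def by (meson inj_onD)
    hence "E * z1 = E * z2" using W_inj Ez z by blast
    thus "z1 = z2" using E by auto
  qed
  have img: "F ` unit_disk = (\<lambda>\<zeta>. cnj E * \<zeta>) ` (\<Phi> ` {w. Re w > 0})"
  proof
    show "F ` unit_disk \<subseteq> (\<lambda>\<zeta>. cnj E * \<zeta>) ` (\<Phi> ` {w. Re w > 0})" using Fz WD by auto
    show "(\<lambda>\<zeta>. cnj E * \<zeta>) ` (\<Phi> ` {w. Re w > 0}) \<subseteq> F ` unit_disk"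
    proof
      fix y assume "y \<in> (\<lambda>\<zeta>. cnj E * \<zeta>) ` (\<Phi> ` {w. Re w > 0})"
      then obtain w where w: "Re w > 0" "y = cnj E * \<Phi> w" by auto
      define z where "z = cnj E * ((w - 1)/(w + 1))"
      have zD: "z \<in> unit_disk" using W_surj(1)[OF w(1)] E
        by (simp only: z_def unit_disk_def mem_ball_0 norm_mult complex_mod_cnj mult_1)
      have "E * z = (w - 1)/(w + 1)" using ce by (simp add: z_def mult.assoc[symmetric] mult.commute)
      hence "F z = y" using Fz[OF zD] W_surj(2)[OF w(1)] w(2) by simp
      thus "y \<in> F ` unit_disk" using zD by blast
    qed
  qed
  have conv: "convex_in_direction F (- G)"
    unfolding convex_in_direction_def
  proof
    fix w0 :: complex
    have cG: "cis (- G) = cnj E" using G by (simp add: cis_cnj[symmetric])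
    have set_eq: "F ` unit_disk \<inter> {w0 + of_real t * cis (- G) | t. True}
        = (\<lambda>\<zeta>. cnj E * \<zeta>) ` (\<Phi> ` {w. Re w > 0} \<inter> {z. Im z = Im (E * w0)})"
    proof
      show "F ` unit_disk \<inter> {w0 + of_real t * cis (- G) | t. True} \<subseteq> (\<lambda>\<zeta>. cnj E * \<zeta>) ` (\<Phi> ` {w. Re w > 0} \<inter> {z. Im z = Im (E * w0)})"
      proof
        fix y assume y: "y \<in> F ` unit_disk \<inter> {w0 + of_real t * cis (- G) | t. True}"
        then obtain \<zeta> where \<zeta>: "\<zeta> \<in> \<Phi> ` {w. Re w > 0}" "y = cnj E * \<zeta>" using img by auto
        obtain t where t: "y = w0 + of_real t * cnj E" using y cG by auto
        have "\<zeta> = E * y" using \<zeta>(2) ce by (simp add: mult.assoc[symmetric] mult.commute)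
        also have "\<dots> = E * w0 + of_real t" using t ce by (simp add: algebra_simps)
        finally have "Im \<zeta> = Im (E * w0)" by simp
        thus "y \<in> (\<lambda>\<zeta>. cnj E * \<zeta>) ` (\<Phi> ` {w. Re w > 0} \<inter> {z. Im z = Im (E * w0)})" using \<zeta> by blast
      qed
      show "(\<lambda>\<zeta>. cnj E * \<zeta>) ` (\<Phi> ` {w. Re w > 0} \<inter> {z. Im z = Im (E * w0)}) \<subseteq> F ` unit_disk \<inter> {w0 + of_real t * cis (- G) | t. True}"
      proof
        fix y assume "y \<in> (\<lambda>\<zeta>. cnj E * \<zeta>) ` (\<Phi> ` {w. Re w > 0} \<inter> {z. Im z = Im (E * w0)})"
        then obtain \<zeta> where \<zeta>: "\<zeta> \<in> \<Phi> ` {w. Re w > 0}" "Im \<zeta> = Im (E * w0)" "y = cnj E * \<zeta>" by auto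
        have y1: "y \<in> F ` unit_disk" using \<zeta> img by blast
        define t where "t = Re \<zeta> - Re (E * w0)"
        have "\<zeta> = E * w0 + of_real t" using \<zeta>(2) by (simp add: t_def complex_eq_iff)
        hence "y = cnj E * E * w0 + of_real t * cnj E" using \<zeta>(3) by (simp add: algebra_simps)
        hence "y = w0 + of_real t * cis (- G)" using ce cG by simp
        thus "y \<in> F ` unit_disk \<inter> {w0 + of_real t * cis (- G) | t. True}" using y1 by blast
      qed
    qed
    have "convex (\<Phi> ` {w. Re w > 0} \<inter> {z. Im z = Im (E * w0)})" using cvx unfolding \<Phi>_def by blast
    hence "convex ((\<lambda>\<zeta>. cnj E * \<zeta>) ` (\<Phi> ` {w. Re w > 0} \<inter> {z. Im z = Im (E * w0)}))"
      by (rule convex_linear_image[rotated]) (rule linear_times)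
    thus "convex (F ` unit_disk \<inter> {w0 + of_real t * cis (- G) | t. True})" unfolding set_eq .
  qed
  show ?thesis using injF conv unfolding F_def by blast
qed

lemma cis_cos_m1: "cos x = -1 \<Longrightarrow> cis x = -1"
proof -
  assume c: "cos x = -1"
  have "(sin x)^2 = 0" using sin_cos_squared_add[of x] c by simp
  hence "sin x = 0" by simp
  thus ?thesis using c by (simp add: complex_eq_iff)
qed

lemma cis_cos_1: "cos x = 1 \<Longrightarrow> cis x = 1"
proof -
  assume c: "cos x = 1"
  have "(sin x)^2 = 0" using sin_cos_squared_add[of x] c by simp
  hence "sin x = 0" by simp
  thus ?thesis using c by (simp add: complex_eq_iff)
qed

lemma aprime_bounds: assumes "a \<in> unit_disk" shows "-1 < aprime a" "aprime a < 1"
proof -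
  have n: "norm a < 1" using assms by (simp add: unit_disk_def)
  have "norm (1 + a) \<le> 1 + norm a" by (metis norm_one norm_triangle_ineq)
  moreover have "1 - norm a \<le> norm (1 + a)" by (metis add_diff_cancel_left' norm_diff_ineq norm_one diff_add_cancel norm_minus_commute norm_triangle_ineq2 add.commute)
  ultimately show "-1 < aprime a" "aprime a < 1" using n by (auto simp: aprime_def)
qed

lemma SH_facts:
  assumes "class_S_half a g h k"
  shows "h holomorphic_on ball 0 1" "k holomorphic_on ball 0 1" "h 0 = 0" "\<forall>z\<in>ball 0 1. deriv h z \<noteq> 0"
proof -
  have H: "h holomorphic_on ball 0 1 \<and> k holomorphic_on ball 0 1 \<and> h 0 = 0 \<and>
      (\<forall>z\<in>ball 0 1. cmod (deriv k z) < cmod (deriv h z))"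
    using assms unfolding class_S_half_def class_SH_def unit_disk_def by blast
  thus "h holomorphic_on ball 0 1" "k holomorphic_on ball 0 1" "h 0 = 0" by auto
  show "\<forall>z\<in>ball 0 1. deriv h z \<noteq> 0"
  proof
    fix z :: complex assume "z \<in> ball 0 1"
    hence "cmod (deriv k z) < cmod (deriv h z)" using H by blast
    hence "cmod (deriv h z) > 0" by (meson norm_ge_zero order_le_less_trans)
    thus "deriv h z \<noteq> 0" by auto
  qed
qed

lemma coeffs_type1:
  fixes a :: real and e :: complex and h g :: "complex \<Rightarrow> complex"
  assumes e: "norm e = 1" and a: "-1 < a" "a < 1"
    and holh: "h holomorphic_on ball 0 1" and holg: "g holomorphic_on ball 0 1" and h0: "h 0 = 0"
    and dh: "\<forall>z\<in>ball 0 1. deriv h z \<noteq> 0"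
    and s: "\<forall>z\<in>ball 0 1. h z + (cnj e)^2 * g z = (1 + of_real a) * z / (1 - e * z)"
    and w: "\<forall>z\<in>ball 0 1. deriv g z / deriv h z = e^2 * ((of_real a - z * e) / (1 - of_real a * z * e))"
  shows "taylor_coeff h n = cnj e * of_real (Aco a n) * e^n"
    and "taylor_coeff g n = e * of_real ((1+a)*e0 n - Aco a n) * e^n"
  using tc_from_sums[OF type1(1)[OF assms]] tc_from_sums[OF type1(2)[OF assms]] by auto

lemma coeffs_type2:
  fixes a :: real and e :: complex and h g :: "complex \<Rightarrow> complex"
  assumes e: "norm e = 1" and a: "-1 < a" "a < 1"
    and holh: "h holomorphic_on ball 0 1" and holg: "g holomorphic_on ball 0 1" and h0: "h 0 = 0"
    and dh: "\<forall>z\<in>ball 0 1. deriv h z \<noteq> 0"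
    and s: "\<forall>z\<in>ball 0 1. h z + (cnj e)^2 * g z = (1 + of_real a) * z / (1 - e * z)"
    and w: "\<forall>z\<in>ball 0 1. deriv g z / deriv h z = e^2 * ((of_real a + z * e) / (1 + of_real a * z * e))"
  shows "taylor_coeff h n = cnj e * of_real (Cco a n) * e^n"
    and "taylor_coeff g n = e * of_real ((1+a)*e0 n - Cco a n) * e^n"
  using tc_from_sums[OF type2(1)[OF assms]] tc_from_sums[OF type2(2)[OF assms]] by auto

theorem theorem6:
  fixes a1 a2 :: complex and \<gamma>1 \<gamma>2 \<theta> :: real
    and h1 g1 h2 g2 :: "complex \<Rightarrow> complex"
  assumes a1: "a1 \<in> unit_disk" and a2: "a2 \<in> unit_disk"
    and g1r: "0 \<le> \<gamma>1" "\<gamma>1 < 2 * pi"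
    and g2r: "0 \<le> \<gamma>2" "\<gamma>2 < 2 * pi"
    and f1: "class_S_half a1 \<gamma>1 h1 g1"
    and f2: "class_S_half a2 \<gamma>2 h2 g2"
    and s1: "\<forall>z\<in>unit_disk. h1 z + cis (- 2 * (\<gamma>1 + gam a1)) * g1 z
              = (1 + of_real (aprime a1)) * z / (1 - cis (\<gamma>1 + gam a1) * z)"
    and s2: "\<forall>z\<in>unit_disk. h2 z + cis (- 2 * (\<gamma>2 + gam a2)) * g2 z
              = (1 + of_real (aprime a2)) * z / (1 - cis (\<gamma>2 + gam a2) * z)"
    and w1: "\<forall>z\<in>unit_disk. deriv g1 z / deriv h1 z
              = cis (2 * (\<gamma>1 + gam a1)) *
                ((of_real (aprime a1) - z * cis (\<gamma>1 + gam a1)) /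
                 (1 - of_real (aprime a1) * z * cis (\<gamma>1 + gam a1)))"
    and w2: "\<forall>z\<in>unit_disk. deriv g2 z / deriv h2 z
              = cis (2 * (\<gamma>2 + gam a2)) *
                ((of_real (aprime a2) + z * cis \<theta>) /
                 (1 + of_real (aprime a2) * z * cis \<theta>))"
    and cases:
      "(cos (\<theta> - \<gamma>2 - gam a2) = -1 \<and>
          1 + 3 * aprime a1 + 3 * aprime a2 + aprime a1 * aprime a2 \<ge> 0) \<or>
       (cos (\<theta> - \<gamma>2 - gam a2) = 1 \<and>
          1 + 3 * aprime a1 + 3 * aprime a1 * aprime a2 + (aprime a1)\<^sup>2 * aprime a2 > 0)"
  shows "inj_on (harm_conv h1 g1 h2 g2) unit_disk \<and>
         convex_in_direction (harm_conv h1 g1 h2 g2)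
           (- (\<gamma>1 + \<gamma>2 + gam a1 + gam a2))"
proof -
  define a where "a = aprime a1"
  define b where "b = aprime a2"
  define p1 where "p1 = \<gamma>1 + gam a1"
  define p2 where "p2 = \<gamma>2 + gam a2"
  define e1 where "e1 = cis p1"
  define e2 where "e2 = cis p2"
  define E where "E = e1 * e2"
  have ab: "-1 < a" "a < 1" "-1 < b" "b < 1" using aprime_bounds a1 a2 by (auto simp: a_def b_def)
  have ne: "norm e1 = 1" "norm e2 = 1" "norm E = 1" by (simp_all add: e1_def e2_def E_def norm_mult)
  have G: "cis (\<gamma>1 + \<gamma>2 + gam a1 + gam a2) = E"
    by (simp add: E_def e1_def e2_def p1_def p2_def cis_mult add_ac)
  have dsk: "unit_disk = ball 0 1" by (simp add: unit_disk_def)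
  note F1 = SH_facts[OF f1] and F2 = SH_facts[OF f2]
  have s1': "\<forall>z\<in>ball 0 1. h1 z + (cnj e1)^2 * g1 z = (1 + of_real a) * z / (1 - e1 * z)"
    using s1 unfolding dsk a_def e1_def p1_def cis_facts(3) .
  have w1': "\<forall>z\<in>ball 0 1. deriv g1 z / deriv h1 z = e1^2 * ((of_real a - z * e1) / (1 - of_real a * z * e1))"
    using w1 unfolding dsk a_def e1_def p1_def cis_facts(2) .
  have s2': "\<forall>z\<in>ball 0 1. h2 z + (cnj e2)^2 * g2 z = (1 + of_real b) * z / (1 - e2 * z)"
    using s2 unfolding dsk b_def e2_def p2_def cis_facts(3) .
  note T1 = coeffs_type1[OF ne(1) ab(1,2) F1 s1' w1']
  have ce: "cnj E = cnj e1 * cnj e2" by (simp add: E_def)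
  from cases show ?thesis
  proof
    assume c: "cos (\<theta> - \<gamma>2 - gam a2) = -1 \<and> 1 + 3 * aprime a1 + 3 * aprime a2 + aprime a1 * aprime a2 \<ge> 0"
    have "cis \<theta> = cis (\<theta> - \<gamma>2 - gam a2) * e2" by (simp add: e2_def p2_def cis_mult)
    hence ct: "cis \<theta> = - e2" using cis_cos_m1[of "\<theta> - \<gamma>2 - gam a2"] c by simp
    have w2': "\<forall>z\<in>ball 0 1. deriv g2 z / deriv h2 z = e2^2 * ((of_real b - z * e2) / (1 - of_real b * z * e2))"
      using w2 unfolding dsk b_def ct e2_def p2_def cis_facts(2) by simp
    note T2 = coeffs_type1[OF ne(2) ab(3,4) F2 s2' w2']
    show ?thesis
    proof (rule final_assembly[OF ne(3) G])
      show "\<forall>n. taylor_coeff h1 n * taylor_coeff h2 n = cnj E * of_real (Aco a n * Aco b n) * E^n"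
        unfolding ce E_def by (intro allI, simp only: T1 T2, simp add: power_mult_distrib algebra_simps)
      show "\<forall>n. taylor_coeff g1 n * taylor_coeff g2 n = E * of_real (((1+a)*e0 n - Aco a n) * ((1+b)*e0 n - Aco b n)) * E^n"
        unfolding E_def by (intro allI, simp only: T1 T2, simp add: power_mult_distrib algebra_simps)
      show "\<forall>u. norm u < 1 \<longrightarrow> (\<lambda>n. of_real (Aco a n * Aco b n) * u^n) sums ((S1 a b (W u) + P1 a b (W u))/2)"
        using had1(1) by blast
      show "\<forall>u. norm u < 1 \<longrightarrow> (\<lambda>n. of_real (((1+a)*e0 n - Aco a n) * ((1+b)*e0 n - Aco b n)) * u^n) sums ((S1 a b (W u) - P1 a b (W u))/2)"
        using had1(2) by blast
      have cc: "1 + 3*a + 3*b + a*b \<ge> 0" using c by (simp add: a_def b_def)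
      show "inj_on (\<lambda>w. Complex (Re (S1 a b w)) (Im (P1 a b w))) {w. Re w > 0}"
        by (rule case1_geom(1)[OF ab cc])
      show "\<forall>T. convex ((\<lambda>w. Complex (Re (S1 a b w)) (Im (P1 a b w))) ` {w. Re w > 0} \<inter> {z. Im z = T})"
        by (rule case1_geom(2)[OF ab cc])
    qed
  next
    assume c: "cos (\<theta> - \<gamma>2 - gam a2) = 1 \<and> 1 + 3 * aprime a1 + 3 * aprime a1 * aprime a2 + (aprime a1)\<^sup>2 * aprime a2 > 0"
    have "cis \<theta> = cis (\<theta> - \<gamma>2 - gam a2) * e2" by (simp add: e2_def p2_def cis_mult)
    hence ct: "cis \<theta> = e2" using cis_cos_1[of "\<theta> - \<gamma>2 - gam a2"] c by simp
    have w2': "\<forall>z\<in>ball 0 1. deriv g2 z / deriv h2 z = e2^2 * ((of_real b + z * e2) / (1 + of_real b * z * e2))"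
      using w2 unfolding dsk b_def ct e2_def p2_def cis_facts(2) by simp
    note T2 = coeffs_type2[OF ne(2) ab(3,4) F2 s2' w2']
    show ?thesis
    proof (rule final_assembly[OF ne(3) G])
      show "\<forall>n. taylor_coeff h1 n * taylor_coeff h2 n = cnj E * of_real (Aco a n * Cco b n) * E^n"
        unfolding ce E_def by (intro allI, simp only: T1 T2, simp add: power_mult_distrib algebra_simps)
      show "\<forall>n. taylor_coeff g1 n * taylor_coeff g2 n = E * of_real (((1+a)*e0 n - Aco a n) * ((1+b)*e0 n - Cco b n)) * E^n"
        unfolding E_def by (intro allI, simp only: T1 T2, simp add: power_mult_distrib algebra_simps)
      show "\<forall>u. norm u < 1 \<longrightarrow> (\<lambda>n. of_real (Aco a n * Cco b n) * u^n) sums ((S2 a b (W u) + P2 a b (W u))/2)"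
        using had2(1) by blast
      show "\<forall>u. norm u < 1 \<longrightarrow> (\<lambda>n. of_real (((1+a)*e0 n - Aco a n) * ((1+b)*e0 n - Cco b n)) * u^n) sums ((S2 a b (W u) - P2 a b (W u))/2)"
        using had2(2) by blast
      have cc: "1 + 3*a + 3*a*b + a^2*b > 0" using c by (simp add: a_def b_def)
      show "inj_on (\<lambda>w. Complex (Re (S2 a b w)) (Im (P2 a b w))) {w. Re w > 0}"
        by (rule case2_geom(1)[OF ab cc])
      show "\<forall>T. convex ((\<lambda>w. Complex (Re (S2 a b w)) (Im (P2 a b w))) ` {w. Re w > 0} \<inter> {z. Im z = T})"
        by (rule case2_geom(2)[OF ab cc])
    qed
  qed
qed

end
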